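(* Suppose the group $\Gamma$ admits a splitting $\Gamma=A\ast B$ with finite non-trivial factors $A,B$. Then the subspace $S\subset\mathrm{H}^2_\mathrm{b}(\Gamma,\mathbb{R})$ of split classes is independent of the choice of a splitting of $\Gamma$ (as a free product of two non-trivial groups).
   Context: For a splitting $\Gamma=A\ast B$, each non-trivial element has a unique normal form $a_1b_1\cdots a_nb_n$ ($a_i\in A$, $b_i\in B$, all non-trivial except possibly $a_1$ or $b_n$), and for bounded alternating functions ($f(x^{-1})=-f(x)$) $f_A:A\to\mathbb{R}$, $f_B:B\to\mathbb{R}$ the split quasimorphism is $(f_A\ast f_B)(1)=0$, $(f_A\ast f_B)(a_1b_1\cdots a_nb_n)=f_A(a_1)+f_B(b_1)+\dots+f_A(a_n)+f_B(b_n)$. The space of split classes $S$ of the splitting is the set of bounded cohomology classes $\omega_{f_A\ast f_B}\in\mathrm{H}^2_\mathrm{b}(\Gamma,\mathbb{R})$, where $\omega_f$ is the class of $\partial f(g,h)=f(g)+f(h)-f(gh)$. *)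

theory Defs
  imports Complex_Main "HOL-Algebra.Group"
begin

text \<open>This is exactly the normal form a1 b1 ... an bn where a1 or bn may be absent.\<close>

definition reduced_word :: "('a, 'b) monoid_scheme \<Rightarrow> 'a set \<Rightarrow> 'a set \<Rightarrow> 'a list \<Rightarrow> bool" where
  "reduced_word G A B ws \<longleftrightarrow>
     set ws \<subseteq> (A \<union> B) - {\<one>\<^bsub>G\<^esub>} \<and>
     (\<forall>i. Suc i < length ws \<longrightarrow>
        \<not> (ws ! i \<in> A \<and> ws ! Suc i \<in> A) \<and> \<not> (ws ! i \<in> B \<and> ws ! Suc i \<in> B))"

definition word_prod :: "('a, 'b) monoid_scheme \<Rightarrow> 'a list \<Rightarrow> 'a" where
  "word_prod G ws = foldr (\<lambda>x y. x \<otimes>\<^bsub>G\<^esub> y) ws \<one>\<^bsub>G\<^esub>"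

text \<open>G = A * B as an (internal) free product of two non-trivial subgroups:
every element has a unique normal form.\<close>

definition is_splitting :: "('a, 'b) monoid_scheme \<Rightarrow> 'a set \<Rightarrow> 'a set \<Rightarrow> bool" where
  "is_splitting G A B \<longleftrightarrow>
     subgroup A G \<and> subgroup B G \<and> A \<inter> B = {\<one>\<^bsub>G\<^esub>} \<and>
     A \<noteq> {\<one>\<^bsub>G\<^esub>} \<and> B \<noteq> {\<one>\<^bsub>G\<^esub>} \<and>
     (\<forall>g \<in> carrier G. \<exists>!ws. reduced_word G A B ws \<and> word_prod G ws = g)"

definition normal_form :: "('a, 'b) monoid_scheme \<Rightarrow> 'a set \<Rightarrow> 'a set \<Rightarrow> 'a \<Rightarrow> 'a list" where
  "normal_form G A B g = (THE ws. reduced_word G A B ws \<and> word_prod G ws = g)"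

definition bounded_alternating :: "('a, 'b) monoid_scheme \<Rightarrow> 'a set \<Rightarrow> ('a \<Rightarrow> real) \<Rightarrow> bool" where
  "bounded_alternating G H f \<longleftrightarrow>
     (\<exists>M. \<forall>x\<in>H. \<bar>f x\<bar> \<le> M) \<and> (\<forall>x\<in>H. f (inv\<^bsub>G\<^esub> x) = - f x)"

text \<open>The split quasimorphism f_A * f_B (value 0 at 1, since the normal form of 1 is empty).\<close>

definition split_qm :: "('a, 'b) monoid_scheme \<Rightarrow> 'a set \<Rightarrow> 'a set \<Rightarrow> ('a \<Rightarrow> real) \<Rightarrow> ('a \<Rightarrow> real) \<Rightarrow> 'a \<Rightarrow> real" where
  "split_qm G A B fA fB g =
     sum_list (map (\<lambda>x. if x \<in> A then fA x else fB x) (normal_form G A B g))"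

definition qm_coboundary :: "('a, 'b) monoid_scheme \<Rightarrow> ('a \<Rightarrow> real) \<Rightarrow> 'a \<Rightarrow> 'a \<Rightarrow> real" where
  "qm_coboundary G f = (\<lambda>g h. f g + f h - f (g \<otimes>\<^bsub>G\<^esub> h))"

text \<open>The class in H^2_b(G,R) of a (bounded inhomogeneous) 2-cochain c: the set of all
2-cochains differing from c (on the carrier) by the coboundary of a bounded 1-cochain.\<close>

definition bclass :: "('a, 'b) monoid_scheme \<Rightarrow> ('a \<Rightarrow> 'a \<Rightarrow> real) \<Rightarrow> ('a \<Rightarrow> 'a \<Rightarrow> real) set" where
  "bclass G c = {c'. \<exists>u :: 'a \<Rightarrow> real. (\<exists>M. \<forall>x\<in>carrier G. \<bar>u x\<bar> \<le> M) \<and>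
       (\<forall>x\<in>carrier G. \<forall>y\<in>carrier G. c' x y = c x y + (u x + u y - u (x \<otimes>\<^bsub>G\<^esub> y)))}"

definition omega :: "('a, 'b) monoid_scheme \<Rightarrow> ('a \<Rightarrow> real) \<Rightarrow> ('a \<Rightarrow> 'a \<Rightarrow> real) set" where
  "omega G f = bclass G (qm_coboundary G f)"

definition split_classes :: "('a, 'b) monoid_scheme \<Rightarrow> 'a set \<Rightarrow> 'a set \<Rightarrow> ('a \<Rightarrow> 'a \<Rightarrow> real) set set" where
  "split_classes G A B =
     {omega G (split_qm G A B fA fB) | fA fB.
        bounded_alternating G A fA \<and> bounded_alternating G B fB}"

end

theory Submission
  imports Defs
begin

lemma all_suc_Cons:
  "(\<forall>i. Suc i < length (x#ws) \<longrightarrow> P ((x#ws)!i) ((x#ws)!Suc i)) \<longleftrightarrow>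
   ((ws \<noteq> [] \<longrightarrow> P x (hd ws)) \<and> (\<forall>i. Suc i < length ws \<longrightarrow> P (ws!i) (ws!Suc i)))"
proof
  assume h: "\<forall>i. Suc i < length (x#ws) \<longrightarrow> P ((x#ws)!i) ((x#ws)!Suc i)"
  have "ws \<noteq> [] \<longrightarrow> P x (hd ws)" using h[rule_format, of 0] by (cases ws) auto
  moreover have "\<forall>i. Suc i < length ws \<longrightarrow> P (ws!i) (ws!Suc i)"
    using h by (metis Suc_less_eq length_Cons nth_Cons_Suc)
  ultimately show "(ws \<noteq> [] \<longrightarrow> P x (hd ws)) \<and> (\<forall>i. Suc i < length ws \<longrightarrow> P (ws!i) (ws!Suc i))" by blast
next
  assume h: "(ws \<noteq> [] \<longrightarrow> P x (hd ws)) \<and> (\<forall>i. Suc i < length ws \<longrightarrow> P (ws!i) (ws!Suc i))"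
  show "\<forall>i. Suc i < length (x#ws) \<longrightarrow> P ((x#ws)!i) ((x#ws)!Suc i)"
  proof (intro allI impI)
    fix i assume "Suc i < length (x#ws)"
    then show "P ((x#ws)!i) ((x#ws)!Suc i)" using h
      by (cases i) (auto simp: hd_conv_nth)
  qed
qed

lemma red_Nil[simp]: "reduced_word G A B []"
  by (simp add: reduced_word_def)

lemma red_Cons:
  "reduced_word G A B (x#ws) \<longleftrightarrow> x \<in> (A \<union> B) - {\<one>\<^bsub>G\<^esub>} \<and> reduced_word G A B ws \<and>
     (ws \<noteq> [] \<longrightarrow> \<not> (x \<in> A \<and> hd ws \<in> A) \<and> \<not> (x \<in> B \<and> hd ws \<in> B))"
  unfolding reduced_word_def
  using all_suc_Cons[of x ws "\<lambda>u v. \<not> (u \<in> A \<and> v \<in> A) \<and> \<not> (u \<in> B \<and> v \<in> B)"]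
  by auto

lemma red_append:
  "reduced_word G A B (u@w) \<longleftrightarrow> reduced_word G A B u \<and> reduced_word G A B w \<and>
     (u \<noteq> [] \<longrightarrow> w \<noteq> [] \<longrightarrow> \<not> (last u \<in> A \<and> hd w \<in> A) \<and> \<not> (last u \<in> B \<and> hd w \<in> B))"
proof (induction u)
  case Nil then show ?case by simp
next
  case (Cons x u)
  show ?case
  proof (cases "u = []")
    case True then show ?thesis by (simp add: red_Cons)
  next
    case False
    then have "hd (u@w) = hd u" "last (x#u) = last u" by auto
    with False show ?thesis by (simp only: append_Cons red_Cons Cons.IH) auto
  qed
qed

lemma red_single: "reduced_word G A B [x] \<longleftrightarrow> x \<in> (A \<union> B) - {\<one>\<^bsub>G\<^esub>}"
  by (simp add: red_Cons)


lemma red_swap: "reduced_word G A B = reduced_word G B A"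
  by (auto simp: reduced_word_def fun_eq_iff)

lemma nf_swap: "normal_form G A B = normal_form G B A"
  by (simp add: normal_form_def red_swap fun_eq_iff)

lemma is_splitting_swap: "is_splitting G A B \<Longrightarrow> is_splitting G B A"
  unfolding is_splitting_def by (auto simp: red_swap)

definition inv_word :: "('a,'b) monoid_scheme \<Rightarrow> 'a list \<Rightarrow> 'a list" where
  "inv_word G w = rev (map (\<lambda>x. inv\<^bsub>G\<^esub> x) w)"

locale fprod = group G for G (structure) + fixes A B assumes spl: "is_splitting G A B"
begin

lemma sgA: "subgroup A G" and sgB: "subgroup B G" and AB_int: "A \<inter> B = {\<one>}"
  and A_ne: "A \<noteq> {\<one>}" and B_ne: "B \<noteq> {\<one>}"
  and uniq: "g \<in> carrier G \<Longrightarrow> \<exists>!ws. reduced_word G A B ws \<and> word_prod G ws = g"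
  using spl unfolding is_splitting_def by auto

lemma A_sub: "A \<subseteq> carrier G" using sgA subgroup.subset by blast
lemma B_sub: "B \<subseteq> carrier G" using sgB subgroup.subset by blast

lemma swap: "fprod G B A"
  by (simp add: fprod_def fprod_axioms_def is_group is_splitting_swap spl)

lemma letter_iff: "x \<in> (A \<union> B) - {\<one>} \<Longrightarrow> x \<in> A \<longleftrightarrow> x \<notin> B"
  using AB_int by auto

lemma red_carrier: "reduced_word G A B w \<Longrightarrow> set w \<subseteq> carrier G"
  using A_sub B_sub by (auto simp: reduced_word_def)

lemma wp_Nil[simp]: "word_prod G [] = \<one>" by (simp add: word_prod_def)
lemma wp_Cons[simp]: "word_prod G (x#w) = x \<otimes> word_prod G w" by (simp add: word_prod_def)

lemma wp_carrier: "set w \<subseteq> carrier G \<Longrightarrow> word_prod G w \<in> carrier G"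
  by (induction w) auto

lemma wp_append: "set u \<subseteq> carrier G \<Longrightarrow> set w \<subseteq> carrier G \<Longrightarrow>
    word_prod G (u@w) = word_prod G u \<otimes> word_prod G w"
  by (induction u) (auto simp: m_assoc wp_carrier)

lemma nf: "g \<in> carrier G \<Longrightarrow> reduced_word G A B (normal_form G A B g) \<and> word_prod G (normal_form G A B g) = g"
  unfolding normal_form_def using uniq by (rule theI')

lemma nf_red: "g \<in> carrier G \<Longrightarrow> reduced_word G A B (normal_form G A B g)" using nf by blast
lemma nf_wp: "g \<in> carrier G \<Longrightarrow> word_prod G (normal_form G A B g) = g" using nf by blast

lemma nf_eq: "reduced_word G A B w \<Longrightarrow> word_prod G w = g \<Longrightarrow> normal_form G A B g = w"
proof -
  assume r: "reduced_word G A B w" and e: "word_prod G w = g"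
  have g: "g \<in> carrier G" using e wp_carrier[OF red_carrier[OF r]] by simp
  show ?thesis unfolding normal_form_def
    by (rule the1_equality[OF uniq[OF g]]) (use r e in auto)
qed

lemma nf_of_wp: "reduced_word G A B w \<Longrightarrow> normal_form G A B (word_prod G w) = w"
  using nf_eq by blast

lemma nf_carrier: "g \<in> carrier G \<Longrightarrow> set (normal_form G A B g) \<subseteq> carrier G"
  using nf_red red_carrier by blast

lemma inv_memA: "x \<in> carrier G \<Longrightarrow> inv x \<in> A \<longleftrightarrow> x \<in> A"
  using sgA by (metis inv_inv subgroup.m_inv_closed)
lemma inv_memB: "x \<in> carrier G \<Longrightarrow> inv x \<in> B \<longleftrightarrow> x \<in> B"
  using sgB by (metis inv_inv subgroup.m_inv_closed)

lemma inv_word_Cons: "inv_word G (x#w) = inv_word G w @ [inv x]"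
  by (simp add: inv_word_def)

lemma red_inv_word: "reduced_word G A B w \<Longrightarrow> reduced_word G A B (inv_word G w)"
proof (induction w)
  case Nil then show ?case by (simp add: inv_word_def)
next
  case (Cons x w)
  have xc: "x \<in> carrier G" using red_carrier[OF Cons.prems] by auto
  have rw: "reduced_word G A B w" and xl: "x \<in> (A \<union> B) - {\<one>}"
    and ok: "w \<noteq> [] \<longrightarrow> \<not> (x \<in> A \<and> hd w \<in> A) \<and> \<not> (x \<in> B \<and> hd w \<in> B)"
    using Cons.prems by (auto simp: red_Cons)
  have hc: "w \<noteq> [] \<Longrightarrow> hd w \<in> carrier G" using red_carrier[OF rw] by (cases w) auto
  have "inv x \<noteq> \<one>" using xl xc by (simp add: inv_eq_1_iff)
  then have "inv x \<in> (A \<union> B) - {\<one>}" using xl inv_memA[OF xc] inv_memB[OF xc] by blast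
  moreover have "w \<noteq> [] \<Longrightarrow> last (inv_word G w) = inv (hd w)"
    by (cases w) (auto simp: inv_word_def)
  moreover have "inv_word G w \<noteq> [] \<longleftrightarrow> w \<noteq> []" by (simp add: inv_word_def)
  ultimately show ?case unfolding inv_word_Cons red_append red_single
  proof (intro conjI impI)
    show "reduced_word G A B (inv_word G w)" by (rule Cons.IH[OF rw])
  next
    assume ne: "inv_word G w \<noteq> []"
    then have wne: "w \<noteq> []" by (simp add: inv_word_def)
    have l: "last (inv_word G w) = inv (hd w)" using wne by (cases w) (auto simp: inv_word_def)
    have okw: "\<not> (x \<in> A \<and> hd w \<in> A) \<and> \<not> (x \<in> B \<and> hd w \<in> B)" using ok wne by blast
    show "\<not> (last (inv_word G w) \<in> A \<and> hd [inv x] \<in> A)"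
      using l okw inv_memA[OF xc] inv_memA[OF hc[OF wne]] by auto
    show "\<not> (last (inv_word G w) \<in> B \<and> hd [inv x] \<in> B)"
      using l okw inv_memB[OF xc] inv_memB[OF hc[OF wne]] by auto
  qed
qed

lemma wp_inv_word: "set w \<subseteq> carrier G \<Longrightarrow> word_prod G (inv_word G w) = inv (word_prod G w)"
proof (induction w)
  case Nil then show ?case by (simp add: inv_word_def)
next
  case (Cons x w)
  have s: "set (inv_word G w) \<subseteq> carrier G" using Cons.prems by (auto simp: inv_word_def)
  have "word_prod G (inv_word G (x#w)) = word_prod G (inv_word G w) \<otimes> word_prod G [inv x]"
    unfolding inv_word_Cons using s Cons.prems by (intro wp_append) auto
  then show ?case using Cons by (simp add: inv_mult_group wp_carrier)
qed

lemma nf_inv: "g \<in> carrier G \<Longrightarrow> normal_form G A B (inv g) = inv_word G (normal_form G A B g)"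
proof -
  assume g: "g \<in> carrier G"
  have r: "reduced_word G A B (normal_form G A B g)" using nf_red[OF g] .
  show ?thesis
  proof (rule nf_eq)
    show "reduced_word G A B (inv_word G (normal_form G A B g))" using red_inv_word[OF r] .
    show "word_prod G (inv_word G (normal_form G A B g)) = inv g"
      using wp_inv_word[OF red_carrier[OF r]] nf_wp[OF g] by simp
  qed
qed

lemma nf_one: "normal_form G A B \<one> = []"
  using nf_eq[of "[]"] by simp

lemma nf_letter: "x \<in> (A \<union> B) - {\<one>} \<Longrightarrow> normal_form G A B x = [x]"
  using nf_eq[of "[x]" x] A_sub B_sub by (auto simp: red_single)

lemma nf_letter_mult:
  assumes s: "s \<in> (A \<union> B) - {\<one>}" and rw: "reduced_word G A B w"
  shows "normal_form G A B (s \<otimes> word_prod G w) =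
    (if w = [] then [s] else if (s \<in> A \<longleftrightarrow> hd w \<in> A) then
       (if s \<otimes> hd w = \<one> then tl w else (s \<otimes> hd w) # tl w) else s # w)"
proof (cases w)
  case Nil
  then show ?thesis using s nf_letter A_sub B_sub by auto
next
  case (Cons y w')
  have sc: "s \<in> carrier G" using s A_sub B_sub by auto
  have yl: "y \<in> (A \<union> B) - {\<one>}" and rw': "reduced_word G A B w'"
    and ok: "w' \<noteq> [] \<longrightarrow> \<not> (y \<in> A \<and> hd w' \<in> A) \<and> \<not> (y \<in> B \<and> hd w' \<in> B)"
    using rw Cons by (auto simp: red_Cons)
  have yc: "y \<in> carrier G" using yl A_sub B_sub by auto
  have w'c: "word_prod G w' \<in> carrier G" using wp_carrier red_carrier rw' by blast
  show ?thesis
  proof (cases "s \<in> A \<longleftrightarrow> y \<in> A")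
    case same: True
    show ?thesis
    proof (cases "s \<otimes> y = \<one>")
      case True
      have "s \<otimes> word_prod G w = word_prod G w'"
        using Cons True sc yc w'c by (simp add: m_assoc[symmetric])
      then show ?thesis using Cons True same nf_of_wp[OF rw'] by simp
    next
      case False
      have sy: "s \<otimes> y \<in> (A \<union> B) - {\<one>}"
      proof (cases "s \<in> A")
        case True then have "y \<in> A" using same by blast
        then have "s \<otimes> y \<in> A" using True subgroup.m_closed[OF sgA] by blast
        then show ?thesis using False by blast
      next
        case False' : False
        then have "s \<in> B" "y \<in> B" using s yl same by auto
        then have "s \<otimes> y \<in> B" using subgroup.m_closed[OF sgB] by blast
        then show ?thesis using False by blast
      qed
      have syA: "s \<otimes> y \<in> A \<longleftrightarrow> y \<in> A"
      proof (cases "s \<in> A")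
        case True then have "y \<in> A" using same by blast
        then show ?thesis using True subgroup.m_closed[OF sgA] by blast
      next
        case False
        then have "s \<in> B" "y \<in> B" using s yl same by auto
        then have "s \<otimes> y \<in> B" using subgroup.m_closed[OF sgB] by blast
        then show ?thesis using letter_iff[OF sy] letter_iff[OF yl] \<open>y \<in> B\<close> by blast
      qed
      have "reduced_word G A B ((s \<otimes> y) # w')"
        unfolding red_Cons using sy rw' ok syA letter_iff[OF sy] letter_iff[OF yl]
        by blast
      moreover have "word_prod G ((s \<otimes> y) # w') = s \<otimes> word_prod G w"
        using Cons sc yc w'c by (simp add: m_assoc)
      ultimately show ?thesis using Cons same False nf_eq by auto
    qed
  next
    case False
    have "reduced_word G A B (s # w)"
      unfolding red_Cons using s rw Cons False letter_iff[OF s] letter_iff[OF yl] by auto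
    then have "normal_form G A B (word_prod G (s # w)) = s # w" by (rule nf_of_wp)
    then have "normal_form G A B (s \<otimes> word_prod G w) = s # w" by simp
    then show ?thesis using Cons False by simp
  qed
qed

end

definition cj :: "('a,'b) monoid_scheme \<Rightarrow> 'a \<Rightarrow> 'a \<Rightarrow> 'a" where
  "cj G k x = k \<otimes>\<^bsub>G\<^esub> x \<otimes>\<^bsub>G\<^esub> inv\<^bsub>G\<^esub> k"

context fprod begin

lemma wp_in_subgroup: "subgroup H G \<Longrightarrow> set w \<subseteq> H \<Longrightarrow> word_prod G w \<in> H"
  by (induction w) (auto intro: subgroup.m_closed subgroup.one_closed)

lemma mult_same:
  assumes s: "s \<in> (A \<union> B) - {\<one>}" and t: "t \<in> (A \<union> B) - {\<one>}"
    and st: "s \<in> A \<longleftrightarrow> t \<in> A" and ne: "s \<otimes> t \<noteq> \<one>"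
  shows "s \<otimes> t \<in> (A \<union> B) - {\<one>} \<and> (s \<otimes> t \<in> A \<longleftrightarrow> s \<in> A) \<and> (s \<otimes> t \<in> B \<longleftrightarrow> s \<in> B)"
proof (cases "s \<in> A")
  case True
  then have "t \<in> A" using st by blast
  then have "s \<otimes> t \<in> A" using True subgroup.m_closed[OF sgA] by blast
  then show ?thesis using ne True letter_iff[OF s] AB_int by blast
next
  case False
  then have "s \<in> B" "t \<in> B" using s t st by auto
  then have "s \<otimes> t \<in> B" using subgroup.m_closed[OF sgB] by blast
  then show ?thesis using ne False \<open>s \<in> B\<close> AB_int by blast
qed

lemma letter_carrier: "s \<in> (A \<union> B) - {\<one>} \<Longrightarrow> s \<in> carrier G"
  using A_sub B_sub by blast

subsection \<open>Retraction onto A\<close>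

definition rho :: "'a \<Rightarrow> 'a" where
  "rho g = word_prod G (filter (\<lambda>x. x \<in> A) (normal_form G A B g))"

lemma wp_filter_carrier: "set w \<subseteq> carrier G \<Longrightarrow> word_prod G (filter P w) \<in> carrier G"
  by (rule wp_carrier) auto

lemma rho_carrier: "g \<in> carrier G \<Longrightarrow> rho g \<in> carrier G"
  unfolding rho_def using nf_carrier wp_filter_carrier by blast

lemma rho_in_A: "rho g \<in> A"
  unfolding rho_def by (rule wp_in_subgroup[OF sgA]) auto

lemma rho_letter_mult:
  assumes s: "s \<in> (A \<union> B) - {\<one>}" and g: "g \<in> carrier G"
  shows "rho (s \<otimes> g) = (if s \<in> A then s else \<one>) \<otimes> rho g"
proof -
  define w where "w = normal_form G A B g"
  have rw: "reduced_word G A B w" and gw: "g = word_prod G w" using nf[OF g] w_def by auto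
  have wc: "set w \<subseteq> carrier G" using red_carrier[OF rw] .
  have sc: "s \<in> carrier G" using letter_carrier[OF s] .
  have N: "normal_form G A B (s \<otimes> g) =
    (if w = [] then [s] else if (s \<in> A \<longleftrightarrow> hd w \<in> A) then
       (if s \<otimes> hd w = \<one> then tl w else (s \<otimes> hd w) # tl w) else s # w)"
    using nf_letter_mult[OF s rw] gw by simp
  have R: "rho g = word_prod G (filter (\<lambda>x. x \<in> A) w)" unfolding rho_def w_def ..
  show ?thesis
  proof (cases w)
    case Nil
    then show ?thesis using N R sc by (simp add: rho_def)
  next
    case (Cons y w')
    have yl: "y \<in> (A \<union> B) - {\<one>}" using rw Cons by (simp add: red_Cons)
    have yc: "y \<in> carrier G" using letter_carrier[OF yl] .
    have fc: "word_prod G (filter (\<lambda>x. x \<in> A) w') \<in> carrier G"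
      using wc Cons wp_filter_carrier by simp
    show ?thesis
    proof (cases "s \<in> A \<longleftrightarrow> y \<in> A")
      case same: True
      show ?thesis
      proof (cases "s \<otimes> y = \<one>")
        case True
        then have "rho (s \<otimes> g) = word_prod G (filter (\<lambda>x. x \<in> A) w')"
          using N Cons same by (simp add: rho_def)
        moreover have "(if s \<in> A then s else \<one>) \<otimes> rho g = word_prod G (filter (\<lambda>x. x \<in> A) w')"
        proof (cases "s \<in> A")
          case sA: True
          then have "(if s \<in> A then s else \<one>) \<otimes> rho g = s \<otimes> (y \<otimes> word_prod G (filter (\<lambda>x. x \<in> A) w'))"
            using R Cons same by simp
          also have "\<dots> = word_prod G (filter (\<lambda>x. x \<in> A) w')"
            using True sc yc fc by (simp add: m_assoc[symmetric])
          finally show ?thesis .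
        next
          case False
          then show ?thesis using R Cons same fc by simp
        qed
        ultimately show ?thesis by simp
      next
        case False
        have M: "s \<otimes> y \<in> (A \<union> B) - {\<one>} \<and> (s \<otimes> y \<in> A \<longleftrightarrow> s \<in> A) \<and> (s \<otimes> y \<in> B \<longleftrightarrow> s \<in> B)"
          using mult_same[OF s yl same False] .
        have N2: "normal_form G A B (s \<otimes> g) = (s \<otimes> y) # w'" using N Cons same False by simp
        show ?thesis
        proof (cases "s \<in> A")
          case sA: True
          then show ?thesis using N2 M R Cons same sc yc fc by (simp add: rho_def m_assoc)
        next
          case sA: False
          then show ?thesis using N2 M R Cons same sc yc fc by (simp add: rho_def)
        qed
      qed
    next
      case False
      have N2: "normal_form G A B (s \<otimes> g) = s # w" using N Cons False by simp
      show ?thesis using N2 R sc wc wp_filter_carrier by (simp add: rho_def)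
    qed
  qed
qed

lemma rho_one: "rho \<one> = \<one>"
  by (simp add: rho_def nf_one)

lemma rho_mult_wp: "reduced_word G A B w \<Longrightarrow> y \<in> carrier G \<Longrightarrow>
    rho (word_prod G w \<otimes> y) = rho (word_prod G w) \<otimes> rho y"
proof (induction w)
  case Nil then show ?case using rho_one rho_carrier by simp
next
  case (Cons s w)
  have s: "s \<in> (A \<union> B) - {\<one>}" and rw: "reduced_word G A B w" using Cons.prems by (auto simp: red_Cons)
  have sc: "s \<in> carrier G" using letter_carrier[OF s] .
  have wc: "word_prod G w \<in> carrier G" using wp_carrier red_carrier rw by blast
  have lc: "(if s \<in> A then s else \<one>) \<in> carrier G" using sc by simp
  have "rho (word_prod G (s#w) \<otimes> y) = rho (s \<otimes> (word_prod G w \<otimes> y))"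
    using sc wc Cons.prems by (simp add: m_assoc)
  also have "\<dots> = (if s \<in> A then s else \<one>) \<otimes> (rho (word_prod G w) \<otimes> rho y)"
    using rho_letter_mult[OF s] Cons.IH[OF rw Cons.prems(2)] wc Cons.prems(2) by simp
  also have "\<dots> = ((if s \<in> A then s else \<one>) \<otimes> rho (word_prod G w)) \<otimes> rho y"
    using lc rho_carrier wc Cons.prems(2) by (simp add: m_assoc)
  also have "(if s \<in> A then s else \<one>) \<otimes> rho (word_prod G w) = rho (word_prod G (s#w))"
    using rho_letter_mult[OF s wc] by simp
  finally show ?case .
qed

lemma rho_mult: "x \<in> carrier G \<Longrightarrow> y \<in> carrier G \<Longrightarrow> rho (x \<otimes> y) = rho x \<otimes> rho y"
  using rho_mult_wp[OF nf_red, of x y] nf_wp[of x] by simp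

lemma rho_A: "a \<in> A \<Longrightarrow> rho a = a"
proof (cases "a = \<one>")
  case True then show ?thesis using rho_one by simp
next
  case False
  assume "a \<in> A"
  then have "a \<in> (A \<union> B) - {\<one>}" using False by blast
  then show ?thesis using \<open>a \<in> A\<close> A_sub by (auto simp: rho_def nf_letter)
qed

lemma rho_B: "b \<in> B \<Longrightarrow> rho b = \<one>"
proof (cases "b = \<one>")
  case True then show ?thesis using rho_one by simp
next
  case False
  assume "b \<in> B"
  then have "b \<in> (A \<union> B) - {\<one>}" "b \<notin> A" using False AB_int by blast+
  then show ?thesis by (simp add: rho_def nf_letter)
qed

lemma rho_inv: "x \<in> carrier G \<Longrightarrow> rho (inv x) = inv (rho x)"
proof -
  assume x: "x \<in> carrier G"
  have "rho (inv x) \<otimes> rho x = \<one>" using rho_mult[OF inv_closed[OF x] x] x rho_one by simp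
  then show ?thesis using x rho_carrier inv_equality by (metis inv_closed)
qed

lemma rho_cj: "k \<in> carrier G \<Longrightarrow> x \<in> carrier G \<Longrightarrow> rho (cj G k x) = cj G (rho k) (rho x)"
  unfolding cj_def using rho_mult rho_inv by simp

lemma gen_induct:
  assumes g: "g \<in> carrier G" and one: "P \<one>"
    and step: "\<And>s x. s \<in> (A \<union> B) - {\<one>} \<Longrightarrow> x \<in> carrier G \<Longrightarrow> P x \<Longrightarrow> P (s \<otimes> x)"
  shows "P g"
proof -
  have "\<And>w. reduced_word G A B w \<Longrightarrow> P (word_prod G w)"
  proof -
    fix w show "reduced_word G A B w \<Longrightarrow> P (word_prod G w)"
    proof (induction w)
      case Nil then show ?case using one by simp
    next
      case (Cons s w)
      then show ?case using step wp_carrier red_carrier by (simp add: red_Cons)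
    qed
  qed
  then show ?thesis using nf[OF g] by metis
qed

end

context group begin

lemma cancel_l1[simp]: "x \<in> carrier G \<Longrightarrow> y \<in> carrier G \<Longrightarrow> inv x \<otimes> (x \<otimes> y) = y"
  by (simp add: m_assoc[symmetric])
lemma cancel_l2[simp]: "x \<in> carrier G \<Longrightarrow> y \<in> carrier G \<Longrightarrow> x \<otimes> (inv x \<otimes> y) = y"
  by (simp add: m_assoc[symmetric])

lemma cj_carrier[simp]: "k \<in> carrier G \<Longrightarrow> x \<in> carrier G \<Longrightarrow> cj G k x \<in> carrier G"
  by (simp add: cj_def)
lemma cj_mult: "k \<in> carrier G \<Longrightarrow> x \<in> carrier G \<Longrightarrow> y \<in> carrier G \<Longrightarrow>
    cj G k x \<otimes> cj G k y = cj G k (x \<otimes> y)"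
  by (simp add: cj_def m_assoc)
lemma cj_inv: "k \<in> carrier G \<Longrightarrow> x \<in> carrier G \<Longrightarrow> inv (cj G k x) = cj G k (inv x)"
  by (simp add: cj_def m_assoc inv_mult_group)
lemma cj_one[simp]: "k \<in> carrier G \<Longrightarrow> cj G k \<one> = \<one>"
  by (simp add: cj_def)
lemma cj_by_one[simp]: "x \<in> carrier G \<Longrightarrow> cj G \<one> x = x"
  by (simp add: cj_def)
lemma cj_cj: "k \<in> carrier G \<Longrightarrow> l \<in> carrier G \<Longrightarrow> x \<in> carrier G \<Longrightarrow>
    cj G k (cj G l x) = cj G (k \<otimes> l) x"
  by (simp add: cj_def m_assoc inv_mult_group)
lemma cj_inv_cancel[simp]: "k \<in> carrier G \<Longrightarrow> x \<in> carrier G \<Longrightarrow> cj G (inv k) (cj G k x) = x"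
  by (simp add: cj_def m_assoc)
lemma cj_inv_cancel2[simp]: "k \<in> carrier G \<Longrightarrow> x \<in> carrier G \<Longrightarrow> cj G k (cj G (inv k) x) = x"
  by (simp add: cj_def m_assoc)
lemma cj_inj: "k \<in> carrier G \<Longrightarrow> inj_on (cj G k) (carrier G)"
proof (rule inj_onI)
  fix x y assume k: "k \<in> carrier G" and xy: "x \<in> carrier G" "y \<in> carrier G" "cj G k x = cj G k y"
  have "x = cj G (inv k) (cj G k x)" using k xy(1) by simp
  also have "\<dots> = cj G (inv k) (cj G k y)" using xy(3) by (rule arg_cong)
  also have "\<dots> = y" using k xy(2) by simp
  finally show "x = y" .
qed

lemma cj_pow: "k \<in> carrier G \<Longrightarrow> x \<in> carrier G \<Longrightarrow> (cj G k x) [^] (n::nat) = cj G k (x [^] n)"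
proof (induction n)
  case 0 then show ?case by simp
next
  case (Suc n)
  have "(cj G k x) [^] (Suc n) = (cj G k x) [^] n \<otimes> cj G k x" by (rule nat_pow_Suc)
  also have "\<dots> = cj G k (x [^] n) \<otimes> cj G k x" using Suc by simp
  also have "\<dots> = cj G k (x [^] n \<otimes> x)" by (rule cj_mult) (use Suc.prems in auto)
  also have "x [^] n \<otimes> x = x [^] Suc n" by simp
  finally show ?case .
qed

lemma subgroup_cj:
  assumes H: "subgroup H G" and k: "k \<in> carrier G"
  shows "subgroup (cj G k ` H) G"
proof (rule subgroupI)
  have Hc: "H \<subseteq> carrier G" using H subgroup.subset by blast
  show "cj G k ` H \<subseteq> carrier G"
  proof
    fix a assume "a \<in> cj G k ` H"
    then obtain x where "x \<in> H" "a = cj G k x" by blast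
    then show "a \<in> carrier G" using Hc k by (simp add: subset_iff)
  qed
  have "\<one> \<in> H" using subgroup.one_closed[OF H] .
  then show "cj G k ` H \<noteq> {}" by blast
  show "inv a \<in> cj G k ` H" if a: "a \<in> cj G k ` H" for a
  proof -
    obtain x where x: "x \<in> H" "a = cj G k x" using a by blast
    have xc: "x \<in> carrier G" using x(1) Hc by blast
    have "inv a = cj G k (inv x)" using cj_inv[OF k xc] x(2) by simp
    moreover have "inv x \<in> H" using subgroup.m_inv_closed[OF H x(1)] .
    ultimately show ?thesis by blast
  qed
  show "a \<otimes> b \<in> cj G k ` H" if a: "a \<in> cj G k ` H" and b: "b \<in> cj G k ` H" for a b
  proof -
    obtain x where x: "x \<in> H" "a = cj G k x" using a by blast
    obtain y where y: "y \<in> H" "b = cj G k y" using b by blast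
    have xc: "x \<in> carrier G" "y \<in> carrier G" using x(1) y(1) Hc by blast+
    have "a \<otimes> b = cj G k (x \<otimes> y)" using cj_mult[OF k xc] x(2) y(2) by simp
    moreover have "x \<otimes> y \<in> H" using subgroup.m_closed[OF H x(1) y(1)] .
    ultimately show ?thesis by blast
  qed
qed

lemma cj_helper: "s \<in> carrier G \<Longrightarrow> t \<in> carrier G \<Longrightarrow> p \<in> carrier G \<Longrightarrow> g = s \<otimes> (p \<otimes> t) \<Longrightarrow> cj G (inv s) g = p \<otimes> t \<otimes> s"
  by (simp add: cj_def m_assoc)

definition fin_ord :: "'a \<Rightarrow> bool" where
  "fin_ord g \<longleftrightarrow> (\<exists>n::nat. n \<ge> 1 \<and> g [^] n = \<one>)"

lemma pow_in_subgroup: "subgroup H G \<Longrightarrow> h \<in> H \<Longrightarrow> h [^] (n::nat) \<in> H"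
  by (induction n) (auto intro: subgroup.m_closed subgroup.one_closed)

lemma fin_ord_sub:
  assumes H: "subgroup H G" and fin: "finite H" and h: "h \<in> H"
  shows "fin_ord h"
proof -
  have hc: "h \<in> carrier G" using H h subgroup.subset by blast
  have "\<not> inj_on (\<lambda>i. h [^] i) {..card H}"
  proof
    assume "inj_on (\<lambda>i. h [^] i) {..card H}"
    moreover have "(\<lambda>i. h [^] i) ` {..card H} \<subseteq> H" using pow_in_subgroup[OF H h] by blast
    ultimately have "card {..card H} \<le> card H" using card_inj_on_le fin by blast
    then show False by simp
  qed
  then obtain i j where ij: "i \<le> card H" "j \<le> card H" "i \<noteq> j" "h [^] i = h [^] j"
    unfolding inj_on_def by blast
  have key: "\<And>i j::nat. i < j \<Longrightarrow> h [^] i = h [^] j \<Longrightarrow> fin_ord h"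
  proof -
    fix i j :: nat assume "i < j" "h [^] i = h [^] j"
    then have "h [^] i \<otimes> h [^] (j - i) = h [^] i"
      using nat_pow_mult[OF hc, of i "j - i"] by simp
    then have "h [^] (j - i) = \<one>" using hc by simp
    then show "fin_ord h" unfolding fin_ord_def using \<open>i < j\<close> by (intro exI[of _ "j - i"]) auto
  qed
  show ?thesis
  proof (cases "i < j")
    case True then show ?thesis using key ij by blast
  next
    case False then have "j < i" using ij by simp
    then show ?thesis using key[of j i] ij by simp
  qed
qed

lemma fin_ord_cj: "k \<in> carrier G \<Longrightarrow> x \<in> carrier G \<Longrightarrow> fin_ord x \<Longrightarrow> fin_ord (cj G k x)"
  unfolding fin_ord_def using cj_pow by auto

end

context fprod begin

lemma red_rep:
  assumes rw: "reduced_word G A B w" and ne: "w \<noteq> []"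
    and ok: "\<not> (last w \<in> A \<and> hd w \<in> A) \<and> \<not> (last w \<in> B \<and> hd w \<in> B)"
  shows "reduced_word G A B (concat (replicate n w)) \<and> (n \<ge> 1 \<longrightarrow> concat (replicate n w) \<noteq> [] \<and> hd (concat (replicate n w)) = hd w)"
proof (induction n)
  case 0 then show ?case by simp
next
  case (Suc n)
  have e: "concat (replicate (Suc n) w) = w @ concat (replicate n w)" by simp
  note IH = Suc.IH
  have "reduced_word G A B (w @ concat (replicate n w))"
  proof (cases n)
    case 0 then show ?thesis using rw by simp
  next
    case (Suc k)
    then have R: "concat (replicate n w) \<noteq> []" "hd (concat (replicate n w)) = hd w"
      "reduced_word G A B (concat (replicate n w))" using IH by auto
    show ?thesis unfolding red_append using rw ok ne R by simp
  qed
  then show ?case using e ne by simp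
qed

lemma wp_rep: "set w \<subseteq> carrier G \<Longrightarrow> word_prod G (concat (replicate n w)) = word_prod G w [^] n"
proof (induction n)
  case 0 then show ?case by simp
next
  case (Suc n)
  have s: "set (concat (replicate n w)) \<subseteq> carrier G" using Suc.prems by auto
  have "word_prod G (concat (replicate (Suc n) w)) = word_prod G w \<otimes> word_prod G w [^] n"
    using wp_append[OF Suc.prems s] Suc.IH[OF Suc.prems] by simp
  then show ?case using nat_pow_Suc2 wp_carrier[OF Suc.prems] by simp
qed

lemma F1:
  assumes rw: "reduced_word G A B w" and ne: "w \<noteq> []"
    and ok: "\<not> (last w \<in> A \<and> hd w \<in> A) \<and> \<not> (last w \<in> B \<and> hd w \<in> B)"
  shows "\<not> fin_ord (word_prod G w)"
proof
  assume "fin_ord (word_prod G w)"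
  then obtain n :: nat where n: "n \<ge> 1" "word_prod G w [^] n = \<one>" unfolding fin_ord_def by blast
  have R: "reduced_word G A B (concat (replicate n w))" "concat (replicate n w) \<noteq> []"
    using red_rep[OF rw ne ok, of n] n by auto
  have "word_prod G (concat (replicate n w)) = \<one>" using wp_rep[OF red_carrier[OF rw]] n by simp
  then have "normal_form G A B \<one> = concat (replicate n w)" using nf_of_wp[OF R(1)] by simp
  then show False using R nf_one by simp
qed

lemma red_snoc_split:
  assumes "reduced_word G A B (s # m @ [t])"
  shows "s \<in> (A \<union> B) - {\<one>}" "t \<in> (A \<union> B) - {\<one>}" "reduced_word G A B m"
    "m \<noteq> [] \<Longrightarrow> \<not> (s \<in> A \<and> hd m \<in> A) \<and> \<not> (s \<in> B \<and> hd m \<in> B)"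
    "m \<noteq> [] \<Longrightarrow> \<not> (last m \<in> A \<and> t \<in> A) \<and> \<not> (last m \<in> B \<and> t \<in> B)"
    "m = [] \<Longrightarrow> \<not> (s \<in> A \<and> t \<in> A) \<and> \<not> (s \<in> B \<and> t \<in> B)"
proof -
  have 1: "s \<in> (A \<union> B) - {\<one>}" "reduced_word G A B (m @ [t])"
    "\<not> (s \<in> A \<and> hd (m @ [t]) \<in> A) \<and> \<not> (s \<in> B \<and> hd (m @ [t]) \<in> B)"
    using assms unfolding red_Cons by auto
  have 2: "reduced_word G A B m" "t \<in> (A \<union> B) - {\<one>}"
    "m \<noteq> [] \<Longrightarrow> \<not> (last m \<in> A \<and> t \<in> A) \<and> \<not> (last m \<in> B \<and> t \<in> B)"
    using 1(2) unfolding red_append red_single by auto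
  have 3: "hd (m @ [t]) = (if m = [] then t else hd m)" by simp
  show "s \<in> (A \<union> B) - {\<one>}" "t \<in> (A \<union> B) - {\<one>}" "reduced_word G A B m"
    using 1 2 by auto
  show "m \<noteq> [] \<Longrightarrow> \<not> (s \<in> A \<and> hd m \<in> A) \<and> \<not> (s \<in> B \<and> hd m \<in> B)"
    using 1(3) 3 by simp
  show "m \<noteq> [] \<Longrightarrow> \<not> (last m \<in> A \<and> t \<in> A) \<and> \<not> (last m \<in> B \<and> t \<in> B)"
    using 2(3) by simp
  show "m = [] \<Longrightarrow> \<not> (s \<in> A \<and> t \<in> A) \<and> \<not> (s \<in> B \<and> t \<in> B)"
    using 1(3) 3 by simp
qed

lemma nf_decomp:
  assumes "length w \<ge> 2"
  shows "w = hd w # butlast (tl w) @ [last w]"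
proof (cases w)
  case Nil then show ?thesis using assms by simp
next
  case (Cons s v)
  then have "v \<noteq> []" using assms by auto
  then show ?thesis using Cons by simp
qed

lemma F2:
  assumes g: "g \<in> carrier G" and fo: "fin_ord g" and len: "length (normal_form G A B g) \<ge> 2"
  shows "\<exists>m. m \<noteq> [] \<and> normal_form G A B g = hd (normal_form G A B g) # m @ [inv (hd (normal_form G A B g))]"
proof -
  define w where "w = normal_form G A B g"
  define s where "s = hd w"
  define t where "t = last w"
  define m where "m = butlast (tl w)"
  have wd: "w = s # m @ [t]" using nf_decomp[of w] len unfolding w_def s_def t_def m_def by simp
  have rw: "reduced_word G A B w" using nf_red[OF g] unfolding w_def .
  have rw': "reduced_word G A B (s # m @ [t])" using rw wd by simp
  note S = red_snoc_split[OF rw']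
  have sc: "s \<in> carrier G" using letter_carrier[OF S(1)] .
  have tc: "t \<in> carrier G" using letter_carrier[OF S(2)] .
  have mc: "set m \<subseteq> carrier G" using red_carrier[OF S(3)] .
  have gw: "word_prod G w = g" using nf_wp[OF g] unfolding w_def .
  have hw: "hd w = s" and lw: "last w = t" using wd by (simp_all add: s_def t_def)
  have nok: "\<not> (\<not> (t \<in> A \<and> s \<in> A) \<and> \<not> (t \<in> B \<and> s \<in> B))"
  proof
    assume ok: "\<not> (t \<in> A \<and> s \<in> A) \<and> \<not> (t \<in> B \<and> s \<in> B)"
    have ne: "w \<noteq> []" using wd by simp
    have "\<not> fin_ord (word_prod G w)" using F1[OF rw ne] ok hw lw by simp
    then show False using fo gw by simp
  qed
  then have same: "(t \<in> A \<and> s \<in> A) \<or> (t \<in> B \<and> s \<in> B)" by blast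
  then have ts: "t \<in> A \<longleftrightarrow> s \<in> A" using letter_iff[OF S(1)] letter_iff[OF S(2)] by blast
  have mne: "m \<noteq> []"
  proof
    assume "m = []"
    then show False using S(6) same by blast
  qed
  have "t \<otimes> s = \<one>"
  proof (rule ccontr)
    assume ne: "t \<otimes> s \<noteq> \<one>"
    note M = mult_same[OF S(2) S(1) ts ne]
    have rW: "reduced_word G A B (m @ [t \<otimes> s])"
      unfolding red_append red_single using S(3) S(5)[OF mne] M by auto
    have ok1: "\<not> (s \<in> A \<and> hd m \<in> A) \<and> \<not> (s \<in> B \<and> hd m \<in> B)" using S(4)[OF mne] .
    have okW: "\<not> (last (m @ [t \<otimes> s]) \<in> A \<and> hd (m @ [t \<otimes> s]) \<in> A) \<and> \<not> (last (m @ [t \<otimes> s]) \<in> B \<and> hd (m @ [t \<otimes> s]) \<in> B)"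
    proof -
      have "last (m @ [t \<otimes> s]) = t \<otimes> s" "hd (m @ [t \<otimes> s]) = hd m" using mne by auto
      moreover have "t \<otimes> s \<in> A \<longleftrightarrow> s \<in> A" "t \<otimes> s \<in> B \<longleftrightarrow> s \<in> B"
        using M ts letter_iff[OF S(1)] letter_iff[OF S(2)] by blast+
      ultimately show ?thesis using ok1 by simp
    qed
    have nfo: "\<not> fin_ord (word_prod G (m @ [t \<otimes> s]))" using F1[OF rW _ okW] by simp
    have wpm: "word_prod G m \<in> carrier G" using wp_carrier[OF mc] .
    have "g = s \<otimes> (word_prod G m \<otimes> t)"
    proof -
      have "word_prod G w = s \<otimes> word_prod G (m @ [t])" using wd by simp
      also have "word_prod G (m @ [t]) = word_prod G m \<otimes> t"
        using wp_append[OF mc, of "[t]"] tc by simp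
      finally show ?thesis using gw by simp
    qed
    then have "cj G (inv s) g = word_prod G m \<otimes> t \<otimes> s"
      using cj_helper[OF sc tc wpm] by blast
    also have "\<dots> = word_prod G m \<otimes> (t \<otimes> s)"
      using sc tc wpm m_assoc by blast
    also have "\<dots> = word_prod G (m @ [t \<otimes> s])"
    proof -
      have "set [t \<otimes> s] \<subseteq> carrier G" using sc tc by simp
      then have "word_prod G (m @ [t \<otimes> s]) = word_prod G m \<otimes> word_prod G [t \<otimes> s]"
        using wp_append[OF mc] by blast
      moreover have "word_prod G [t \<otimes> s] = t \<otimes> s" using sc tc by simp
      ultimately show ?thesis by simp
    qed
    finally show False using nfo fin_ord_cj[OF inv_closed[OF sc] g fo] by simp
  qed
  then have "t = inv s" using inv_equality[of t s] sc tc by simp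
  then have X: "w = s # m @ [inv s]" using wd by simp
  have "normal_form G A B g = hd (normal_form G A B g) # m @ [inv (hd (normal_form G A B g))]"
    using X unfolding s_def w_def .
  then show ?thesis using mne by blast
qed

end

context fprod begin

definition len :: "'a \<Rightarrow> nat" where "len x = length (normal_form G A B x)"

lemma ok_iff:
  assumes "x \<in> (A \<union> B) - {\<one>}" "y \<in> (A \<union> B) - {\<one>}"
  shows "(\<not> (x \<in> A \<and> y \<in> A) \<and> \<not> (x \<in> B \<and> y \<in> B)) \<longleftrightarrow> \<not> (x \<in> A \<longleftrightarrow> y \<in> A)"
  using letter_iff[OF assms(1)] letter_iff[OF assms(2)] by blast

lemma inv_letter:
  assumes x: "x \<in> (A \<union> B) - {\<one>}"
  shows "inv x \<in> (A \<union> B) - {\<one>}" "inv x \<in> A \<longleftrightarrow> x \<in> A"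
proof -
  have xc: "x \<in> carrier G" using letter_carrier[OF x] .
  have "inv x \<noteq> \<one>" using x xc by simp
  then show "inv x \<in> (A \<union> B) - {\<one>}" using x inv_memA[OF xc] inv_memB[OF xc] by blast
  show "inv x \<in> A \<longleftrightarrow> x \<in> A" using inv_memA[OF xc] .
qed

lemma len_le1:
  assumes x: "x \<in> carrier G" and l: "len x \<le> 1"
  shows "x \<in> A \<union> B"
proof (cases "normal_form G A B x")
  case Nil
  then have "x = \<one>" using nf_wp[OF x] by simp
  then show ?thesis using subgroup.one_closed[OF sgA] by simp
next
  case (Cons y w)
  then have "w = []" using l by (simp add: len_def)
  then have "normal_form G A B x = [y]" using Cons by simp
  moreover have "reduced_word G A B [y]" using nf_red[OF x] calculation by simp
  ultimately have "x = y" "y \<in> (A \<union> B) - {\<one>}" using nf_wp[OF x] letter_carrier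
    by (auto simp: red_single)
  then show ?thesis by blast
qed

lemma len_A: "x \<in> A \<Longrightarrow> len x \<le> 1"
  by (cases "x = \<one>") (auto simp: len_def nf_one nf_letter)
lemma len_B: "x \<in> B \<Longrightarrow> len x \<le> 1"
  by (cases "x = \<one>") (auto simp: len_def nf_one nf_letter)

lemma len_one_letter:
  assumes x: "x \<in> carrier G" and l: "len x = 1"
  shows "normal_form G A B x = [x]" "x \<in> (A \<union> B) - {\<one>}"
proof -
  obtain y where y: "normal_form G A B x = [y]" using l unfolding len_def
    by (cases "normal_form G A B x") auto
  have "reduced_word G A B [y]" using nf_red[OF x] y by simp
  then have yl: "y \<in> (A \<union> B) - {\<one>}" by (simp add: red_single)
  have "x = y" using nf_wp[OF x] y letter_carrier[OF yl] by simp
  then show "normal_form G A B x = [x]" "x \<in> (A \<union> B) - {\<one>}" using y yl by simp_all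
qed

lemma fin_ord_inv: "x \<in> carrier G \<Longrightarrow> fin_ord x \<Longrightarrow> fin_ord (inv x)"
  unfolding fin_ord_def using nat_pow_inv by fastforce

lemma nf_inv_form:
  assumes "normal_form G A B h = s # m @ [inv s]" and h: "h \<in> carrier G" and s: "s \<in> carrier G"
  shows "hd (normal_form G A B (inv h)) = s" "len (inv h) = len h"
  using assms by (simp_all add: nf_inv len_def inv_word_def)

lemma red_hd_letter: "reduced_word G A B w \<Longrightarrow> w \<noteq> [] \<Longrightarrow> hd w \<in> (A \<union> B) - {\<one>}"
  by (cases w) (auto simp: red_Cons)
lemma red_last_letter:
  assumes "reduced_word G A B w" "w \<noteq> []" shows "last w \<in> (A \<union> B) - {\<one>}"
proof -
  have "last w \<in> set w" using assms(2) by simp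
  then show ?thesis using assms(1) unfolding reduced_word_def by blast
qed

lemma FS_i:
  assumes h0: "h0 \<in> carrier G" and h1: "h1 \<in> carrier G" and fo: "fin_ord (inv h0 \<otimes> h1)"
    and n0: "normal_form G A B h0 = s # m0 @ [inv s]" and n1: "normal_form G A B h1 = t # m2 @ [inv t]"
    and m0: "m0 \<noteq> []" and m2: "m2 \<noteq> []"
  shows "t = s"
proof (rule ccontr)
  assume ts: "t \<noteq> s"
  have r0: "reduced_word G A B (s # m0 @ [inv s])" using nf_red[OF h0] n0 by simp
  have rv: "reduced_word G A B (t # m2 @ [inv t])" using nf_red[OF h1] n1 by simp
  have sl: "s \<in> (A \<union> B) - {\<one>}" using red_snoc_split(1)[OF r0] .
  have tl: "t \<in> (A \<union> B) - {\<one>}" using red_snoc_split(1)[OF rv] .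
  have sc: "s \<in> carrier G" using letter_carrier[OF sl] .
  have tc: "t \<in> carrier G" using letter_carrier[OF tl] .
  note isl = inv_letter[OF sl] and itl = inv_letter[OF tl]
  define m1 where "m1 = inv_word G m0"
  define u where "u = s # m1 @ [inv s]"
  define v where "v = t # m2 @ [inv t]"
  have nu: "normal_form G A B (inv h0) = u"
    using nf_inv[OF h0] n0 sc unfolding u_def m1_def by (simp add: inv_word_def)
  have ru: "reduced_word G A B u" using nf_red[OF inv_closed[OF h0]] nu by simp
  have rv': "reduced_word G A B v" using rv v_def by simp
  have wu: "word_prod G u = inv h0" using nf_wp[OF inv_closed[OF h0]] nu by simp
  have wv: "word_prod G v = h1" using nf_wp[OF h1] n1 v_def by simp
  have uc: "set u \<subseteq> carrier G" using red_carrier[OF ru] .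
  have vc: "set v \<subseteq> carrier G" using red_carrier[OF rv'] .
  show False
  proof (cases "s \<in> A \<longleftrightarrow> t \<in> A")
    case False
    have okuv: "\<not> (last u \<in> A \<and> hd v \<in> A) \<and> \<not> (last u \<in> B \<and> hd v \<in> B)"
      unfolding u_def v_def using ok_iff[OF isl(1) tl] isl(2) False by simp
    have rW: "reduced_word G A B (u @ v)" unfolding red_append using ru rv' okuv by blast
    have okW: "\<not> (last (u @ v) \<in> A \<and> hd (u @ v) \<in> A) \<and> \<not> (last (u @ v) \<in> B \<and> hd (u @ v) \<in> B)"
      unfolding u_def v_def using ok_iff[OF itl(1) sl] itl(2) False by simp
    have "\<not> fin_ord (word_prod G (u @ v))" using F1[OF rW _ okW] unfolding u_def by simp
    moreover have "word_prod G (u @ v) = inv h0 \<otimes> h1" using wp_append[OF uc vc] wu wv by simp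
    ultimately show False using fo by simp
  next
    case True
    define c where "c = inv s \<otimes> t"
    have cne: "c \<noteq> \<one>"
    proof
      assume "c = \<one>"
      then have "s \<otimes> c = s" using sc by simp
      moreover have "s \<otimes> c = t" unfolding c_def using sc tc by simp
      ultimately show False using ts by simp
    qed
    have st': "inv s \<in> A \<longleftrightarrow> t \<in> A" using True isl(2) by simp
    note M = mult_same[OF isl(1) tl st' cne[unfolded c_def]]
    have cl: "c \<in> (A \<union> B) - {\<one>}" and cA: "c \<in> A \<longleftrightarrow> s \<in> A"
      using M isl(2) unfolding c_def by auto
    have cc: "c \<in> carrier G" using letter_carrier[OF cl] .
    define L where "L = s # m1"
    define R1 where "R1 = m2 @ [inv t]"
    define R2 where "R2 = c # R1"
    have uL: "u = L @ [inv s]" unfolding u_def L_def by simp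
    have vR: "v = t # R1" unfolding v_def R1_def by simp
    have ru2: "reduced_word G A B (L @ [inv s])" using ru uL by simp
    have rL: "reduced_word G A B L" and okL: "\<not> (last L \<in> A \<and> inv s \<in> A) \<and> \<not> (last L \<in> B \<and> inv s \<in> B)"
      using ru2 unfolding red_append L_def by auto
    have rv2: "reduced_word G A B (t # R1)" using rv' vR by simp
    have rR1: "reduced_word G A B R1" and okR: "\<not> (t \<in> A \<and> hd R1 \<in> A) \<and> \<not> (t \<in> B \<and> hd R1 \<in> B)"
      using rv2 unfolding red_Cons R1_def by auto
    have R1ne: "R1 \<noteq> []" unfolding R1_def by simp
    have Lne: "L \<noteq> []" unfolding L_def by simp
    have hl: "hd R1 \<in> (A \<union> B) - {\<one>}" using red_hd_letter[OF rR1 R1ne] .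
    have ll: "last L \<in> (A \<union> B) - {\<one>}" using red_last_letter[OF rL Lne] .
    have rR2: "reduced_word G A B R2"
      unfolding R2_def red_Cons using cl rR1 R1ne ok_iff[OF cl hl] ok_iff[OF tl hl] okR cA True by blast
    have okLc: "\<not> (last L \<in> A \<and> hd R2 \<in> A) \<and> \<not> (last L \<in> B \<and> hd R2 \<in> B)"
      unfolding R2_def using ok_iff[OF ll cl] ok_iff[OF ll isl(1)] okL cA isl(2) by simp
    have rW: "reduced_word G A B (L @ R2)" unfolding red_append using rL rR2 okLc by blast
    have Lc: "set L \<subseteq> carrier G" using red_carrier[OF rL] .
    have R1c: "set R1 \<subseteq> carrier G" using red_carrier[OF rR1] .
    have R2c: "set R2 \<subseteq> carrier G" using red_carrier[OF rR2] .
    have wL: "word_prod G L \<in> carrier G" using wp_carrier[OF Lc] .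
    have wR1: "word_prod G R1 \<in> carrier G" using wp_carrier[OF R1c] .
    have isc: "inv s \<in> carrier G" using sc by simp
    have "word_prod G (L @ R2) = word_prod G L \<otimes> (c \<otimes> word_prod G R1)"
      using wp_append[OF Lc R2c] unfolding R2_def by simp
    also have "\<dots> = (word_prod G L \<otimes> inv s) \<otimes> (t \<otimes> word_prod G R1)"
      unfolding c_def using wL wR1 isc tc by (simp add: m_assoc)
    also have "word_prod G L \<otimes> inv s = inv h0"
      using wu wp_append[OF Lc, of "[inv s]"] isc uL by simp
    also have "t \<otimes> word_prod G R1 = h1" using wv vR by simp
    finally have wW: "word_prod G (L @ R2) = inv h0 \<otimes> h1" .
    have nW: "normal_form G A B (inv h0 \<otimes> h1) = L @ R2" using nf_of_wp[OF rW] wW by simp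
    have pc: "inv h0 \<otimes> h1 \<in> carrier G" using h0 h1 by simp
    have "length (normal_form G A B (inv h0 \<otimes> h1)) \<ge> 2" using nW unfolding L_def R2_def by simp
    then obtain m where m: "normal_form G A B (inv h0 \<otimes> h1) =
        hd (normal_form G A B (inv h0 \<otimes> h1)) # m @ [inv (hd (normal_form G A B (inv h0 \<otimes> h1)))]"
      using F2[OF pc fo] by blast
    have "hd (L @ R2) = s" unfolding L_def by simp
    moreover have "last (L @ R2) = inv t" unfolding R2_def R1_def by simp
    ultimately have e: "L @ R2 = s # m @ [inv s]" using m nW by simp
    have "inv t = inv s" using arg_cong[where f=last, OF e] \<open>last (L @ R2) = inv t\<close> by simp
    then have "inv (inv t) = inv (inv s)" by simp
    then have "t = s" using sc tc by simp
    then show False using ts by simp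
  qed
qed

lemma FS_ii:
  assumes h0: "h0 \<in> carrier G" and y: "y \<in> (A \<union> B) - {\<one>}"
    and n0: "normal_form G A B h0 = s # m0 @ [inv s]" and ys: "\<not> (y \<in> A \<longleftrightarrow> s \<in> A)"
  shows "\<not> fin_ord (y \<otimes> h0)"
proof -
  have r0: "reduced_word G A B (s # m0 @ [inv s])" using nf_red[OF h0] n0 by simp
  have sl: "s \<in> (A \<union> B) - {\<one>}" using red_snoc_split(1)[OF r0] .
  note isl = inv_letter[OF sl]
  have rW: "reduced_word G A B (y # s # m0 @ [inv s])"
    unfolding red_Cons[of _ _ _ y] using y r0 ok_iff[OF y sl] ys by simp
  have okW: "\<not> (last (y # s # m0 @ [inv s]) \<in> A \<and> hd (y # s # m0 @ [inv s]) \<in> A) \<and>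
      \<not> (last (y # s # m0 @ [inv s]) \<in> B \<and> hd (y # s # m0 @ [inv s]) \<in> B)"
    using ok_iff[OF isl(1) y] isl(2) ys by simp
  have "\<not> fin_ord (word_prod G (y # s # m0 @ [inv s]))" using F1[OF rW _ okW] by simp
  moreover have "word_prod G (y # s # m0 @ [inv s]) = y \<otimes> h0"
    using nf_wp[OF h0] n0 by simp
  ultimately show ?thesis by simp
qed

lemma cj_strip:
  assumes h: "h \<in> carrier G" and n: "normal_form G A B h = s # m @ [inv s]"
  shows "len (cj G (inv s) h) < len h"
proof -
  have r: "reduced_word G A B (s # m @ [inv s])" using nf_red[OF h] n by simp
  have sl: "s \<in> (A \<union> B) - {\<one>}" using red_snoc_split(1)[OF r] .
  have sc: "s \<in> carrier G" using letter_carrier[OF sl] .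
  have rm: "reduced_word G A B m" using red_snoc_split(3)[OF r] .
  have mc: "set m \<subseteq> carrier G" using red_carrier[OF rm] .
  have wm: "word_prod G m \<in> carrier G" using wp_carrier[OF mc] .
  have isc: "inv s \<in> carrier G" using sc by simp
  have "h = word_prod G (s # m @ [inv s])" using nf_wp[OF h] n by simp
  also have "\<dots> = s \<otimes> (word_prod G m \<otimes> inv s)"
    using wp_append[OF mc, of "[inv s]"] isc by simp
  finally have hf: "h = s \<otimes> (word_prod G m \<otimes> inv s)" .
  have "cj G (inv s) h = word_prod G m \<otimes> inv s \<otimes> s" by (rule cj_helper[OF sc isc wm hf])
  also have "\<dots> = word_prod G m" using wm sc by (simp add: m_assoc)
  finally have "cj G (inv s) h = word_prod G m" .
  then have "normal_form G A B (cj G (inv s) h) = m" using nf_of_wp[OF rm] by simp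
  then show ?thesis using n by (simp add: len_def)
qed

end

context fprod begin

lemma cj_in_sub: "subgroup K G \<Longrightarrow> k \<in> K \<Longrightarrow> x \<in> K \<Longrightarrow> cj G k x \<in> K"
  unfolding cj_def by (intro subgroup.m_closed subgroup.m_inv_closed) auto

lemma cj_one_image: "X \<subseteq> carrier G \<Longrightarrow> cj G \<one> ` X = X"
proof -
  assume X: "X \<subseteq> carrier G"
  have "cj G \<one> ` X = (\<lambda>x. x) ` X" using X by (intro image_cong) auto
  then show ?thesis by simp
qed

lemma FS_aux:
  "\<forall>H. subgroup H G \<and> finite H \<and> sum len H = N \<longrightarrow> (\<exists>g\<in>carrier G. H \<subseteq> cj G g ` A \<or> H \<subseteq> cj G g ` B)"
proof (induction N rule: less_induct)
  case (less N)
  show ?case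
  proof (intro allI impI)
    fix H assume asm: "subgroup H G \<and> finite H \<and> sum len H = N"
    then have H: "subgroup H G" and fin: "finite H" and N: "sum len H = N" by auto
    have Hc: "H \<subseteq> carrier G" using H subgroup.subset by blast
    have hc: "\<And>h. h \<in> H \<Longrightarrow> h \<in> carrier G" using Hc by blast
    have fo: "\<And>h. h \<in> H \<Longrightarrow> fin_ord h" using fin_ord_sub[OF H fin] by blast
    have one: "\<one> \<in> A" "\<one> \<in> B" using subgroup.one_closed[OF sgA] subgroup.one_closed[OF sgB] by auto
    show "\<exists>g\<in>carrier G. H \<subseteq> cj G g ` A \<or> H \<subseteq> cj G g ` B"
    proof (cases "\<forall>h\<in>H. len h \<le> 1")
      case True
      have AB: "\<And>h. h \<in> H \<Longrightarrow> h \<in> A \<union> B" using True len_le1 hc by blast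
      have "H \<subseteq> A \<or> H \<subseteq> B"
      proof (rule ccontr)
        assume "\<not> (H \<subseteq> A \<or> H \<subseteq> B)"
        then obtain a b where a: "a \<in> H" "a \<notin> B" and b: "b \<in> H" "b \<notin> A" by blast
        have al: "a \<in> (A \<union> B) - {\<one>}" "a \<in> A" using AB[OF a(1)] a(2) one by auto
        have bl: "b \<in> (A \<union> B) - {\<one>}" using AB[OF b(1)] b(2) one by auto
        have rb: "reduced_word G A B [b]" using bl by (simp add: red_single)
        have "normal_form G A B (a \<otimes> word_prod G [b]) = [a, b]"
          using nf_letter_mult[OF al(1) rb] al(2) b(2) by simp
        moreover have "word_prod G [b] = b" using hc[OF b(1)] by simp
        ultimately have "len (a \<otimes> b) = 2" by (simp add: len_def)
        moreover have "a \<otimes> b \<in> H" using subgroup.m_closed[OF H a(1) b(1)] .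
        ultimately show False using True by fastforce
      qed
      then show ?thesis
      proof
        assume "H \<subseteq> A" then have "H \<subseteq> cj G \<one> ` A" using cj_one_image[OF A_sub] by simp
        then show ?thesis using one_closed by blast
      next
        assume "H \<subseteq> B" then have "H \<subseteq> cj G \<one> ` B" using cj_one_image[OF B_sub] by simp
        then show ?thesis using one_closed by blast
      qed
    next
      case False
      then obtain h0 where h0: "h0 \<in> H" "len h0 \<ge> 2" by fastforce
      define s where "s = hd (normal_form G A B h0)"
      obtain m0 where n0: "normal_form G A B h0 = s # m0 @ [inv s]" and m0: "m0 \<noteq> []"
        using F2[OF hc[OF h0(1)] fo[OF h0(1)]] h0(2) unfolding s_def len_def by blast
      have r0: "reduced_word G A B (s # m0 @ [inv s])" using nf_red[OF hc[OF h0(1)]] n0 by simp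
      have sl: "s \<in> (A \<union> B) - {\<one>}" using red_snoc_split(1)[OF r0] .
      have sc: "s \<in> carrier G" using letter_carrier[OF sl] .
      have isc: "inv s \<in> carrier G" using sc by simp
      have I: "\<exists>m. m \<noteq> [] \<and> normal_form G A B h = s # m @ [inv s]" if h: "h \<in> H" "len h \<ge> 2" for h
      proof -
        define t where "t = hd (normal_form G A B h)"
        obtain m where n: "normal_form G A B h = t # m @ [inv t]" and m: "m \<noteq> []"
          using F2[OF hc[OF h(1)] fo[OF h(1)]] h(2) unfolding t_def len_def by blast
        have "inv h0 \<otimes> h \<in> H"
          using subgroup.m_closed[OF H subgroup.m_inv_closed[OF H h0(1)] h(1)] .
        then have "fin_ord (inv h0 \<otimes> h)" using fo by blast
        then have "t = s" using FS_i[OF hc[OF h0(1)] hc[OF h(1)] _ n0 n m0 m] by blast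
        then show ?thesis using n m by blast
      qed
      have II: "h \<in> A \<longleftrightarrow> s \<in> A" if h: "h \<in> H" "len h = 1" for h
      proof (rule ccontr)
        assume ne: "\<not> (h \<in> A \<longleftrightarrow> s \<in> A)"
        have hl: "h \<in> (A \<union> B) - {\<one>}" using len_one_letter(2)[OF hc[OF h(1)] h(2)] .
        have "h \<otimes> h0 \<in> H" using subgroup.m_closed[OF H h(1) h0(1)] .
        then have "fin_ord (h \<otimes> h0)" using fo by blast
        then show False using FS_ii[OF hc[OF h0(1)] hl n0 ne] by blast
      qed
      define H' where "H' = cj G (inv s) ` H"
      have H': "subgroup H' G" unfolding H'_def using subgroup_cj[OF H isc] .
      have fin': "finite H'" unfolding H'_def using fin by simp
      have inj: "inj_on (cj G (inv s)) H" using inj_on_subset[OF cj_inj[OF isc] Hc] .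
      have sumH': "sum len H' = sum (len \<circ> cj G (inv s)) H" unfolding H'_def using sum.reindex[OF inj] .
      have P: "len (cj G (inv s) h) \<le> len h" if h: "h \<in> H" for h
      proof (cases "len h \<ge> 2")
        case True
        then obtain m where "normal_form G A B h = s # m @ [inv s]" using I[OF h] by blast
        then show ?thesis using cj_strip[OF hc[OF h]] by (simp add: less_imp_le)
      next
        case False
        then have "len h = 0 \<or> len h = 1" by auto
        then show ?thesis
        proof
          assume l0: "len h = 0"
          then have "normal_form G A B h = []" by (simp add: len_def)
          then have "h = \<one>" using nf_wp[OF hc[OF h]] by simp
          then have "cj G (inv s) h = \<one>" using isc by simp
          then show ?thesis by (simp add: len_def nf_one)
        next
          assume l1: "len h = 1"
          have hl: "h \<in> (A \<union> B) - {\<one>}" using len_one_letter(2)[OF hc[OF h] l1] .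
          have hs: "h \<in> A \<longleftrightarrow> s \<in> A" using II[OF h l1] .
          show ?thesis
          proof (cases "s \<in> A")
            case True
            then have "h \<in> A" "inv s \<in> A" using hs subgroup.m_inv_closed[OF sgA] by auto
            then have "cj G (inv s) h \<in> A" using cj_in_sub[OF sgA] by blast
            then show ?thesis using len_A l1 by fastforce
          next
            case False
            then have "s \<in> B" "h \<in> B" using sl hl hs by auto
            then have "h \<in> B" "inv s \<in> B" using subgroup.m_inv_closed[OF sgB] by auto
            then have "cj G (inv s) h \<in> B" using cj_in_sub[OF sgB] by blast
            then show ?thesis using len_B l1 by fastforce
          qed
        qed
      qed
      have P0: "len (cj G (inv s) h0) < len h0" using cj_strip[OF hc[OF h0(1)] n0] .
      have "sum (len \<circ> cj G (inv s)) H < sum len H"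
        using sum_strict_mono_ex1[OF fin, of "len \<circ> cj G (inv s)" len] P P0 h0(1) by auto
      then have lt: "sum len H' < N" using sumH' N by simp
      obtain g' where g': "g' \<in> carrier G" and cov: "H' \<subseteq> cj G g' ` A \<or> H' \<subseteq> cj G g' ` B"
        using less.IH[OF lt] H' fin' by blast
      have sg: "s \<otimes> g' \<in> carrier G" using sc g' by simp
      have bk: "\<And>h X. h \<in> H \<Longrightarrow> X \<subseteq> carrier G \<Longrightarrow> H' \<subseteq> cj G g' ` X \<Longrightarrow> h \<in> cj G (s \<otimes> g') ` X"
      proof -
        fix h X assume h: "h \<in> H" and X: "X \<subseteq> carrier G" and HX: "H' \<subseteq> cj G g' ` X"
        have "cj G (inv s) h \<in> H'" unfolding H'_def using h by blast
        then obtain x where x: "x \<in> X" "cj G (inv s) h = cj G g' x" using HX by blast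
        have xc: "x \<in> carrier G" using x(1) X by blast
        have "h = cj G s (cj G (inv s) h)" using sc hc[OF h] by simp
        also have "\<dots> = cj G s (cj G g' x)" using x(2) by simp
        also have "\<dots> = cj G (s \<otimes> g') x" using cj_cj[OF sc g' xc] .
        finally show "h \<in> cj G (s \<otimes> g') ` X" using x(1) by blast
      qed
      from cov show ?thesis
      proof
        assume "H' \<subseteq> cj G g' ` A"
        then have "H \<subseteq> cj G (s \<otimes> g') ` A" using bk A_sub by blast
        then show ?thesis using sg by blast
      next
        assume "H' \<subseteq> cj G g' ` B"
        then have "H \<subseteq> cj G (s \<otimes> g') ` B" using bk B_sub by blast
        then show ?thesis using sg by blast
      qed
    qed
  qed
qed

theorem finite_subgroup_conj:
  assumes "subgroup H G" "finite H"
  shows "\<exists>g\<in>carrier G. H \<subseteq> cj G g ` A \<or> H \<subseteq> cj G g ` B"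
  using FS_aux assms by blast

end

context group begin

lemma cj_mem_iff: "k \<in> carrier G \<Longrightarrow> X \<subseteq> carrier G \<Longrightarrow> u \<in> carrier G \<Longrightarrow> cj G k u \<in> cj G k ` X \<longleftrightarrow> u \<in> X"
  using inj_on_image_mem_iff[OF cj_inj] by blast

lemma cj_eq_one_iff: "k \<in> carrier G \<Longrightarrow> u \<in> carrier G \<Longrightarrow> cj G k u = \<one> \<longleftrightarrow> u = \<one>"
proof
  assume k: "k \<in> carrier G" and u: "u \<in> carrier G" and e: "cj G k u = \<one>"
  have "u = cj G (inv k) (cj G k u)" using k u by simp
  also have "\<dots> = \<one>" using e k by simp
  finally show "u = \<one>" .
next
  assume "k \<in> carrier G" "u = \<one>" then show "cj G k u = \<one>" by simp
qed

lemma red_map_cj: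
  assumes r: "reduced_word G X Y W" and k: "k \<in> carrier G" and X: "X \<subseteq> carrier G" and Y: "Y \<subseteq> carrier G"
  shows "reduced_word G (cj G k ` X) (cj G k ` Y) (map (cj G k) W)"
proof -
  have Wc: "set W \<subseteq> carrier G" using r X Y unfolding reduced_word_def by blast
  have s1: "set (map (cj G k) W) \<subseteq> (cj G k ` X \<union> cj G k ` Y) - {\<one>}"
  proof
    fix z assume "z \<in> set (map (cj G k) W)"
    then obtain u where u: "u \<in> set W" "z = cj G k u" by auto
    have uc: "u \<in> carrier G" using u(1) Wc by blast
    have "u \<in> (X \<union> Y) - {\<one>}" using r u(1) unfolding reduced_word_def by blast
    then have "u \<in> X \<or> u \<in> Y" "u \<noteq> \<one>" by auto
    then have "cj G k u \<in> cj G k ` X \<or> cj G k u \<in> cj G k ` Y" "cj G k u \<noteq> \<one>"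
      using cj_eq_one_iff[OF k uc] by auto
    then show "z \<in> (cj G k ` X \<union> cj G k ` Y) - {\<one>}" using u(2) by auto
  qed
  have s2: "\<forall>i. Suc i < length (map (cj G k) W) \<longrightarrow>
        \<not> (map (cj G k) W ! i \<in> cj G k ` X \<and> map (cj G k) W ! Suc i \<in> cj G k ` X) \<and>
        \<not> (map (cj G k) W ! i \<in> cj G k ` Y \<and> map (cj G k) W ! Suc i \<in> cj G k ` Y)"
  proof (intro allI impI)
    fix i assume i: "Suc i < length (map (cj G k) W)"
    then have i': "Suc i < length W" by simp
    have c1: "W ! i \<in> carrier G" "W ! Suc i \<in> carrier G" using i' Wc nth_mem by (auto simp: subset_iff)
    have o: "\<not> (W ! i \<in> X \<and> W ! Suc i \<in> X) \<and> \<not> (W ! i \<in> Y \<and> W ! Suc i \<in> Y)"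
      using r i' unfolding reduced_word_def by blast
    show "\<not> (map (cj G k) W ! i \<in> cj G k ` X \<and> map (cj G k) W ! Suc i \<in> cj G k ` X) \<and>
        \<not> (map (cj G k) W ! i \<in> cj G k ` Y \<and> map (cj G k) W ! Suc i \<in> cj G k ` Y)"
      using o i' cj_mem_iff[OF k X c1(1)] cj_mem_iff[OF k X c1(2)]
        cj_mem_iff[OF k Y c1(1)] cj_mem_iff[OF k Y c1(2)] by simp
  qed
  show ?thesis unfolding reduced_word_def using s1 s2 by blast
qed

lemma wp_map_cj: "k \<in> carrier G \<Longrightarrow> set W \<subseteq> carrier G \<Longrightarrow> word_prod G (map (cj G k) W) = cj G k (word_prod G W)"
proof (induction W)
  case Nil then show ?case by (simp add: word_prod_def)
next
  case (Cons x W)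
  have xc: "x \<in> carrier G" and Wc: "set W \<subseteq> carrier G" using Cons.prems by auto
  have wW: "word_prod G W \<in> carrier G"
  proof -
    have "\<And>V. set V \<subseteq> carrier G \<Longrightarrow> word_prod G V \<in> carrier G"
    proof -
      fix V :: "'a list" show "set V \<subseteq> carrier G \<Longrightarrow> word_prod G V \<in> carrier G"
        by (induction V) (auto simp: word_prod_def)
    qed
    then show ?thesis using Wc .
  qed
  have "word_prod G (map (cj G k) (x # W)) = cj G k x \<otimes> word_prod G (map (cj G k) W)"
    by (simp add: word_prod_def)
  also have "\<dots> = cj G k x \<otimes> cj G k (word_prod G W)" using Cons.IH[OF Cons.prems(1) Wc] by simp
  also have "\<dots> = cj G k (x \<otimes> word_prod G W)" using cj_mult[OF Cons.prems(1) xc wW] .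
  also have "x \<otimes> word_prod G W = word_prod G (x # W)" by (simp add: word_prod_def)
  finally show ?case .
qed

lemma cj_image_cj: "k \<in> carrier G \<Longrightarrow> l \<in> carrier G \<Longrightarrow> X \<subseteq> carrier G \<Longrightarrow>
    cj G k ` (cj G l ` X) = cj G (k \<otimes> l) ` X"
proof -
  assume k: "k \<in> carrier G" and l: "l \<in> carrier G" and X: "X \<subseteq> carrier G"
  have "cj G k ` (cj G l ` X) = (cj G k \<circ> cj G l) ` X" by (simp add: image_comp)
  also have "\<dots> = cj G (k \<otimes> l) ` X"
    using k l X cj_cj by (intro image_cong) (auto simp: subset_iff)
  finally show ?thesis .
qed

lemma cj_image_subgroup: "subgroup K G \<Longrightarrow> a \<in> K \<Longrightarrow> cj G a ` K = K"
proof
  assume K: "subgroup K G" and a: "a \<in> K"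
  have Kc: "K \<subseteq> carrier G" using K subgroup.subset by blast
  have ac: "a \<in> carrier G" using a Kc by blast
  show "cj G a ` K \<subseteq> K"
  proof
    fix z assume "z \<in> cj G a ` K"
    then obtain x where x: "x \<in> K" "z = cj G a x" by blast
    then show "z \<in> K" unfolding cj_def using K a by (simp add: subgroup.m_closed subgroup.m_inv_closed)
  qed
  show "K \<subseteq> cj G a ` K"
  proof
    fix x assume x: "x \<in> K"
    have ia: "inv a \<in> K" using subgroup.m_inv_closed[OF K a] .
    have y: "cj G (inv a) x \<in> K" unfolding cj_def using K ia x a
      by (simp add: subgroup.m_closed subgroup.m_inv_closed)
    have "x = cj G a (cj G (inv a) x)" using ac x Kc by auto
    then show "x \<in> cj G a ` K" using y by blast
  qed
qed

end

context fprod begin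


end

context fprod begin

lemma rho_cj_B: "g \<in> carrier G \<Longrightarrow> b \<in> B \<Longrightarrow> rho (cj G g b) = \<one>"
proof -
  assume g: "g \<in> carrier G" and b: "b \<in> B"
  have bc: "b \<in> carrier G" using b B_sub by blast
  have "rho (cj G g b) = cj G (rho g) (rho b)" using rho_cj[OF g bc] .
  also have "\<dots> = \<one>" using rho_B[OF b] rho_carrier[OF g] by simp
  finally show ?thesis .
qed

lemma no_both:
  assumes XY: "fprod G X Y" and g: "g \<in> carrier G" and h: "h \<in> carrier G"
    and X: "X \<subseteq> cj G g ` B" and Y: "Y \<subseteq> cj G h ` B"
  shows False
proof -
  interpret P: fprod G X Y by (rule XY)
  have kill: "rho x = \<one>" if x: "x \<in> carrier G" for x
  proof (rule P.gen_induct[OF x])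
    show "rho \<one> = \<one>" by (rule rho_one)
  next
    fix s x assume s: "s \<in> (X \<union> Y) - {\<one>}" and xc: "x \<in> carrier G" and ih: "rho x = \<one>"
    have sc: "s \<in> carrier G" using P.letter_carrier[OF s] .
    have "rho s = \<one>"
    proof (cases "s \<in> X")
      case True
      then obtain b where "b \<in> B" "s = cj G g b" using X by blast
      then show ?thesis using rho_cj_B[OF g] by simp
    next
      case False
      then have "s \<in> Y" using s by blast
      then obtain b where "b \<in> B" "s = cj G h b" using Y by blast
      then show ?thesis using rho_cj_B[OF h] by simp
    qed
    then show "rho (s \<otimes> x) = \<one>" using rho_mult[OF sc xc] ih by simp
  qed
  obtain a where a: "a \<in> A" "a \<noteq> \<one>" using A_ne subgroup.one_closed[OF sgA] by blast
  have "rho a = a" using rho_A[OF a(1)] .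
  moreover have "rho a = \<one>" using kill A_sub a(1) by blast
  ultimately show False using a(2) by simp
qed

lemma exact:
  assumes XY: "fprod G X Y" and finX: "finite X" and g: "g \<in> carrier G" and h: "h \<in> carrier G"
    and X: "X \<subseteq> cj G g ` A" and Y: "Y \<subseteq> cj G h ` B"
  shows "X = cj G g ` A"
proof -
  interpret P: fprod G X Y by (rule XY)
  have all: "rho x \<in> rho ` X" if x: "x \<in> carrier G" for x
  proof (rule P.gen_induct[OF x])
    show "rho \<one> \<in> rho ` X" using subgroup.one_closed[OF P.sgA] by blast
  next
    fix s x assume s: "s \<in> (X \<union> Y) - {\<one>}" and xc: "x \<in> carrier G" and ih: "rho x \<in> rho ` X"
    have sc: "s \<in> carrier G" using P.letter_carrier[OF s] .
    obtain x' where x': "x' \<in> X" "rho x = rho x'" using ih by blast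
    have x'c: "x' \<in> carrier G" using x'(1) P.A_sub by blast
    show "rho (s \<otimes> x) \<in> rho ` X"
    proof (cases "s \<in> X")
      case True
      have "rho (s \<otimes> x) = rho s \<otimes> rho x'" using rho_mult[OF sc xc] x'(2) by simp
      also have "\<dots> = rho (s \<otimes> x')" using rho_mult[OF sc x'c] by simp
      finally show ?thesis using subgroup.m_closed[OF P.sgA True x'(1)] by blast
    next
      case False
      then have "s \<in> Y" using s by blast
      then obtain b where "b \<in> B" "s = cj G h b" using Y by blast
      then have "rho s = \<one>" using rho_cj_B[OF h] by simp
      then have "rho (s \<otimes> x) = rho x" using rho_mult[OF sc xc] rho_carrier[OF xc] by simp
      then show ?thesis using ih by simp
    qed
  qed
  have AX: "A \<subseteq> rho ` X"
  proof
    fix a assume a: "a \<in> A"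
    have "rho a = a" using rho_A[OF a] .
    then show "a \<in> rho ` X" using all[of a] a A_sub by force
  qed
  have finA: "finite A" using finite_subset[OF AX] finX by blast
  have c1: "card A \<le> card X" using card_mono[OF finite_imageI[OF finX] AX] card_image_le[OF finX, of rho] by simp
  have c2: "card (cj G g ` A) \<le> card A" using card_image_le[OF finA] .
  have c3: "card X \<le> card (cj G g ` A)" using card_mono[OF finite_imageI[OF finA] X] .
  show ?thesis using card_subset_eq[OF finite_imageI[OF finA] X] c1 c2 c3 by simp
qed

end

lemma struct_thm:
  assumes P: "fprod G A B" and finA: "finite A" and finB: "finite B" and P': "fprod G A' B'"
  shows "\<exists>g\<in>carrier G. \<exists>h\<in>carrier G. (A = cj G g ` A' \<and> B = cj G h ` B') \<or> (A = cj G g ` B' \<and> B = cj G h ` A')"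
proof -
  interpret P: fprod G A B by (rule P)
  interpret P': fprod G A' B' by (rule P')
  interpret Q': fprod G B' A' by (rule P'.swap)
  obtain g where g: "g \<in> carrier G" and gA: "A \<subseteq> cj G g ` A' \<or> A \<subseteq> cj G g ` B'"
    using P'.finite_subgroup_conj[OF P.sgA finA] by blast
  obtain h where h: "h \<in> carrier G" and hB: "B \<subseteq> cj G h ` A' \<or> B \<subseteq> cj G h ` B'"
    using P'.finite_subgroup_conj[OF P.sgB finB] by blast
  show ?thesis
  proof (cases "A \<subseteq> cj G g ` A'")
    case A1: True
    show ?thesis
    proof (cases "B \<subseteq> cj G h ` A'")
      case True
      then show ?thesis using Q'.no_both[OF P g h A1 True] by blast
    next
      case False
      then have B2: "B \<subseteq> cj G h ` B'" using hB by blast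
      have "A = cj G g ` A'" using P'.exact[OF P finA g h A1 B2] .
      moreover have "B = cj G h ` B'" using Q'.exact[OF P.swap finB h g B2 A1] .
      ultimately show ?thesis using g h by blast
    qed
  next
    case False
    then have A2: "A \<subseteq> cj G g ` B'" using gA by blast
    show ?thesis
    proof (cases "B \<subseteq> cj G h ` B'")
      case True
      then show ?thesis using P'.no_both[OF P g h A2 True] by blast
    next
      case False
      then have B1: "B \<subseteq> cj G h ` A'" using hB by blast
      have "A = cj G g ` B'" using Q'.exact[OF P finA g h A2 B1] .
      moreover have "B = cj G h ` A'" using P'.exact[OF P.swap finB h g B1 A2] .
      ultimately show ?thesis using g h by blast
    qed
  qed
qed


context fprod begin

lemma strip_back:
  assumes r: "reduced_word G A B w"
  shows "\<exists>\<beta> w1. \<beta> \<in> B \<and> reduced_word G A B w1 \<and> word_prod G w = word_prod G w1 \<otimes> \<beta> \<and>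
     (w1 \<noteq> [] \<longrightarrow> last w1 \<notin> B) \<and> (w1 \<noteq> [] \<longrightarrow> hd w1 = hd w)"
proof (cases "w \<noteq> [] \<and> last w \<in> B")
  case True
  define w1 where "w1 = butlast w"
  have wd: "w = w1 @ [last w]" using True unfolding w1_def by simp
  have r2: "reduced_word G A B (w1 @ [last w])" using r wd by simp
  have rw1: "reduced_word G A B w1" and ok: "w1 \<noteq> [] \<longrightarrow> \<not> (last w1 \<in> A \<and> last w \<in> A) \<and> \<not> (last w1 \<in> B \<and> last w \<in> B)"
    using r2 unfolding red_append by auto
  have lc: "last w \<in> carrier G" using True B_sub by blast
  have w1c: "set w1 \<subseteq> carrier G" using red_carrier[OF rw1] .
  have "word_prod G w = word_prod G w1 \<otimes> word_prod G [last w]"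
    using wp_append[OF w1c, of "[last w]"] lc wd by simp
  then have "word_prod G w = word_prod G w1 \<otimes> last w" using lc by simp
  moreover have "w1 \<noteq> [] \<longrightarrow> hd w1 = hd w" using wd by (metis hd_append2)
  ultimately show ?thesis using True rw1 ok by blast
next
  case False
  have "word_prod G w = word_prod G w \<otimes> \<one>" using wp_carrier[OF red_carrier[OF r]] by simp
  moreover have "\<one> \<in> B" using subgroup.one_closed[OF sgB] .
  ultimately show ?thesis using False r by blast
qed

lemma strip_front:
  assumes r: "reduced_word G A B w1" and l: "w1 \<noteq> [] \<longrightarrow> last w1 \<notin> B"
  shows "\<exists>a m. a \<in> A \<and> reduced_word G A B m \<and> word_prod G w1 = a \<otimes> word_prod G m \<and>
     (m \<noteq> [] \<longrightarrow> hd m \<notin> A \<and> last m \<notin> B)"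
proof (cases "w1 \<noteq> [] \<and> hd w1 \<in> A")
  case True
  then obtain a m where wd: "w1 = a # m" by (cases w1) auto
  have aA: "a \<in> A" using True wd by simp
  have rm: "reduced_word G A B m" and ok: "m \<noteq> [] \<longrightarrow> \<not> (a \<in> A \<and> hd m \<in> A) \<and> \<not> (a \<in> B \<and> hd m \<in> B)"
    using r wd unfolding wd red_Cons by auto
  have "m \<noteq> [] \<longrightarrow> last m = last w1" using wd by simp
  then have "m \<noteq> [] \<longrightarrow> hd m \<notin> A \<and> last m \<notin> B" using ok aA l wd by auto
  moreover have "word_prod G w1 = a \<otimes> word_prod G m" using wd by simp
  ultimately show ?thesis using aA rm by blast
next
  case False
  have "word_prod G w1 = \<one> \<otimes> word_prod G w1" using wp_carrier[OF red_carrier[OF r]] by simp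
  moreover have "\<one> \<in> A" using subgroup.one_closed[OF sgA] .
  moreover have "w1 \<noteq> [] \<longrightarrow> hd w1 \<notin> A \<and> last w1 \<notin> B" using False l by blast
  ultimately show ?thesis using r by blast
qed

lemma strip:
  assumes e: "e \<in> carrier G"
  shows "\<exists>a \<beta> m. a \<in> A \<and> \<beta> \<in> B \<and> reduced_word G A B m \<and> e = a \<otimes> (word_prod G m \<otimes> \<beta>) \<and>
     (m \<noteq> [] \<longrightarrow> hd m \<in> B \<and> last m \<in> A)"
proof -
  obtain \<beta> w1 where b: "\<beta> \<in> B" "reduced_word G A B w1" "word_prod G (normal_form G A B e) = word_prod G w1 \<otimes> \<beta>"
     "w1 \<noteq> [] \<longrightarrow> last w1 \<notin> B"
    using strip_back[OF nf_red[OF e]] by blast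
  obtain a m where a: "a \<in> A" "reduced_word G A B m" "word_prod G w1 = a \<otimes> word_prod G m"
     "m \<noteq> [] \<longrightarrow> hd m \<notin> A \<and> last m \<notin> B"
    using strip_front[OF b(2) b(4)] by blast
  have ac: "a \<in> carrier G" using a(1) A_sub by blast
  have bc: "\<beta> \<in> carrier G" using b(1) B_sub by blast
  have mc: "word_prod G m \<in> carrier G" using wp_carrier[OF red_carrier[OF a(2)]] .
  have "e = a \<otimes> word_prod G m \<otimes> \<beta>" using nf_wp[OF e] b(3) a(3) by simp
  then have ee: "e = a \<otimes> (word_prod G m \<otimes> \<beta>)" using ac bc mc by (simp add: m_assoc)
  have "m \<noteq> [] \<longrightarrow> hd m \<in> B \<and> last m \<in> A"
  proof
    assume mne: "m \<noteq> []"
    have "hd m \<in> (A \<union> B) - {\<one>}" using red_hd_letter[OF a(2) mne] .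
    moreover have "last m \<in> (A \<union> B) - {\<one>}" using red_last_letter[OF a(2) mne] .
    ultimately show "hd m \<in> B \<and> last m \<in> A" using a(4) mne by blast
  qed
  then show ?thesis using a(1,2) b(1) ee by blast
qed

end

context fprod begin

lemma GEN:
  assumes rm: "reduced_word G A B m" and mne: "m \<noteq> []" and hm: "hd m \<in> B" and lm: "last m \<in> A"
    and rV: "reduced_word G A (cj G (word_prod G m) ` B) V" and wV: "word_prod G V = b0"
    and b0: "b0 \<in> B" "b0 \<noteq> \<one>"
  shows False
proof -
  define c where "c = word_prod G m"
  define mi where "mi = inv_word G m"
  define D where "D = cj G c ` B"
  have mc: "set m \<subseteq> carrier G" using red_carrier[OF rm] .
  have cc: "c \<in> carrier G" unfolding c_def using wp_carrier[OF mc] .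
  have rmi: "reduced_word G A B mi" unfolding mi_def using red_inv_word[OF rm] .
  have mic: "set mi \<subseteq> carrier G" using red_carrier[OF rmi] .
  have wmi: "word_prod G mi = inv c" unfolding mi_def c_def using wp_inv_word[OF mc] .
  have mine: "mi \<noteq> []" using mne unfolding mi_def by (simp add: inv_word_def)
  have hml: "hd m \<in> (A \<union> B) - {\<one>}" using red_hd_letter[OF rm mne] .
  have Dc: "D \<subseteq> carrier G" unfolding D_def using cc B_sub by auto
  have lml: "last m \<in> (A \<union> B) - {\<one>}" using red_last_letter[OF rm mne] .
  have hmA: "hd m \<notin> A" using hm hml AB_int by blast
  have lmc: "last m \<in> carrier G" using letter_carrier[OF lml] .
  have hmc: "hd m \<in> carrier G" using letter_carrier[OF hml] .
  have hmi: "hd mi = inv (last m)" using mne unfolding mi_def inv_word_def by (simp add: hd_rev last_map)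
  have lmi: "last mi = inv (hd m)" using mne unfolding mi_def inv_word_def by (simp add: last_rev hd_map)
  have hmiA: "hd mi \<in> A" using hmi inv_memA[OF lmc] lm by simp
  have lmiB: "last mi \<in> B" using lmi inv_memB[OF hmc] hm by simp
  have lmil: "last mi \<in> (A \<union> B) - {\<one>}" using red_last_letter[OF rmi mine] .
  have lmiA: "last mi \<notin> A" using lmiB lmil AB_int by blast
  have hmil: "hd mi \<in> (A \<union> B) - {\<one>}" using red_hd_letter[OF rmi mine] .
  have C: "reduced_word G A B (m @ [y] @ mi) \<and> word_prod G (m @ [y] @ mi) = cj G c y"
    if y: "y \<in> B" "y \<noteq> \<one>" for y
  proof
    have yl: "y \<in> (A \<union> B) - {\<one>}" using y by blast
    have yA: "y \<notin> A" using y AB_int by blast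
    have yc: "y \<in> carrier G" using y B_sub by blast
    have r1: "reduced_word G A B ([y] @ mi)"
      unfolding red_append red_single using yl rmi mine ok_iff[OF yl hmil] yA hmiA by simp
    show "reduced_word G A B (m @ [y] @ mi)"
      unfolding red_append[of G A B m "[y] @ mi"] using rm r1 mne ok_iff[OF lml yl] lm yA by simp
    have "word_prod G (m @ [y] @ mi) = c \<otimes> (y \<otimes> inv c)"
      using wp_append[OF mc, of "[y] @ mi"] wp_append[of "[y]" mi] mic yc wmi unfolding c_def by simp
    then show "word_prod G (m @ [y] @ mi) = cj G c y" unfolding cj_def using cc yc by (simp add: m_assoc)
  qed
  have Q: "\<exists>y t. y \<in> B \<and> y \<noteq> \<one> \<and> normal_form G A B (word_prod G U) = m @ [y] @ mi @ t \<and>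
             (t \<noteq> [] \<longrightarrow> hd t \<in> A)"
    if "reduced_word G A D U" "U \<noteq> []" "hd U \<in> D" for U
    using that
  proof (induction "length U" arbitrary: U rule: less_induct)
    case less
    obtain d U' where Ueq: "U = d # U'" using less.prems(2) by (cases U) auto
    have rdU: "reduced_word G A D (d # U')" using less.prems(1) Ueq by simp
    have dl: "d \<in> (A \<union> D) - {\<one>}" and rU': "reduced_word G A D U'"
      and okd: "U' \<noteq> [] \<longrightarrow> \<not> (d \<in> A \<and> hd U' \<in> A) \<and> \<not> (d \<in> D \<and> hd U' \<in> D)"
      using rdU unfolding red_Cons by auto
    have dD: "d \<in> D" using less.prems(3) Ueq by simp
    obtain y where y: "y \<in> B" "d = cj G c y" using dD unfolding D_def by blast
    have yc: "y \<in> carrier G" using y(1) B_sub by blast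
    have yne: "y \<noteq> \<one>" using dl y(2) cc by auto
    note Cy = C[OF y(1) yne]
    have dc: "d \<in> carrier G" using y(2) cc yc by simp
    show ?case
    proof (cases "U' = []")
      case True
      have "word_prod G (d # U') = d" using True dc by simp
      then have "normal_form G A B (word_prod G (d # U')) = m @ [y] @ mi"
        using nf_of_wp[OF conjunct1[OF Cy]] conjunct2[OF Cy] y(2) by simp
      then show ?thesis using Ueq y(1) yne by (intro exI[of _ y] exI[of _ "[]"]) simp
    next
      case False
      then obtain z U'' where U'eq: "U' = z # U''" by (cases U') auto
      have rzU: "reduced_word G A D (z # U'')" using rU' U'eq by simp
      have zl: "z \<in> (A \<union> D) - {\<one>}" and rU'': "reduced_word G A D U''"
        and okz: "U'' \<noteq> [] \<longrightarrow> \<not> (z \<in> A \<and> hd U'' \<in> A) \<and> \<not> (z \<in> D \<and> hd U'' \<in> D)"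
        using rzU unfolding red_Cons by auto
      have zA: "z \<in> A" using okd U'eq dD zl by auto
      have zB: "z \<notin> B" using zA zl AB_int by blast
      have zl': "z \<in> (A \<union> B) - {\<one>}" using zA zl by blast
      have zc: "z \<in> carrier G" using zA A_sub by blast
      have r2: "reduced_word G A B ((m @ [y] @ mi) @ [z])"
        unfolding red_append[of G A B "m @ [y] @ mi" "[z]"] red_single
        using conjunct1[OF Cy] zl' lmiA zA ok_iff[OF lmil zl'] mine by simp
      show ?thesis
      proof (cases "U'' = []")
        case True
        have "word_prod G (d # U') = d \<otimes> z" using U'eq True dc zc by simp
        also have "\<dots> = word_prod G ((m @ [y] @ mi) @ [z])"
          using wp_append[OF red_carrier[OF conjunct1[OF Cy]], of "[z]"] zc conjunct2[OF Cy] y(2) by simp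
        finally have "normal_form G A B (word_prod G (d # U')) = (m @ [y] @ mi) @ [z]"
          using nf_of_wp[OF r2] by simp
        then show ?thesis using Ueq y(1) yne zA by (intro exI[of _ y] exI[of _ "[z]"]) simp
      next
        case False
        have hU'': "hd U'' \<in> D"
        proof -
          have "hd U'' \<in> (A \<union> D) - {\<one>}"
            using rU'' False by (cases U'') (auto simp: red_Cons)
          then show ?thesis using okz False zA by blast
        qed
        obtain y' t' where IH: "y' \<in> B" "y' \<noteq> \<one>" "normal_form G A B (word_prod G U'') = m @ [y'] @ mi @ t'"
          using less.hyps[of U''] rU'' False hU'' Ueq U'eq by auto
        define W where "W = m @ [y'] @ mi @ t'"
        have Uc: "word_prod G U'' \<in> carrier G"
        proof -
          have "set U'' \<subseteq> carrier G" using rU'' A_sub Dc unfolding reduced_word_def by blast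
          then show ?thesis using wp_carrier by blast
        qed
        have rW: "reduced_word G A B W" unfolding W_def using nf_red[OF Uc] IH(3) by simp
        have wW: "word_prod G W = word_prod G U''" unfolding W_def using nf_wp[OF Uc] IH(3) by simp
        have Wc: "set W \<subseteq> carrier G" using red_carrier[OF rW] .
        have hW: "hd W = hd m" unfolding W_def using mne by simp
        have r3: "reduced_word G A B (((m @ [y] @ mi) @ [z]) @ W)"
          unfolding red_append[of G A B "(m @ [y] @ mi) @ [z]" W]
          using r2 rW hW hmA zA ok_iff[OF zl' hml] by simp
        have Cc: "set ((m @ [y] @ mi) @ [z]) \<subseteq> carrier G" using red_carrier[OF r2] .
        have "word_prod G (((m @ [y] @ mi) @ [z]) @ W) = word_prod G ((m @ [y] @ mi) @ [z]) \<otimes> word_prod G W"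
          using wp_append[OF Cc Wc] .
        also have "word_prod G ((m @ [y] @ mi) @ [z]) = d \<otimes> z"
          using wp_append[OF red_carrier[OF conjunct1[OF Cy]], of "[z]"] zc conjunct2[OF Cy] y(2) by simp
        also have "d \<otimes> z \<otimes> word_prod G W = word_prod G (d # U')"
          using U'eq wW dc zc Uc by (simp add: m_assoc)
        finally have "normal_form G A B (word_prod G (d # U')) = ((m @ [y] @ mi) @ [z]) @ W"
          using nf_of_wp[OF r3] by simp
        then show ?thesis using Ueq y(1) yne zA
          by (intro exI[of _ y] exI[of _ "[z] @ W"]) simp
      qed
    qed
  qed
  have b0l: "b0 \<in> (A \<union> B) - {\<one>}" using b0 by blast
  have nb0: "normal_form G A B b0 = [b0]" using nf_letter[OF b0l] .
  show False
  proof (cases V)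
    case Nil then show False using wV b0 by simp
  next
    case (Cons z V')
    have zl: "z \<in> (A \<union> D) - {\<one>}" and rV': "reduced_word G A D V'"
      and okz: "V' \<noteq> [] \<longrightarrow> \<not> (z \<in> A \<and> hd V' \<in> A) \<and> \<not> (z \<in> D \<and> hd V' \<in> D)"
    proof -
      have "reduced_word G A D (z # V')" using rV Cons unfolding D_def c_def by simp
      then show "z \<in> (A \<union> D) - {\<one>}" "reduced_word G A D V'"
        "V' \<noteq> [] \<longrightarrow> \<not> (z \<in> A \<and> hd V' \<in> A) \<and> \<not> (z \<in> D \<and> hd V' \<in> D)"
        unfolding red_Cons by auto
    qed
    show False
    proof (cases "z \<in> D")
      case True
      have "reduced_word G A D V" using rV unfolding D_def c_def .
      moreover have "V \<noteq> []" "hd V \<in> D" using Cons True by simp_all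
      ultimately obtain y t where "normal_form G A B (word_prod G V) = m @ [y] @ mi @ t"
        using Q[of V] by blast
      then have "[b0] = m @ [y] @ mi @ t" using wV nb0 by simp
      then have "length [b0] = length (m @ [y] @ mi @ t)" by (rule arg_cong)
      then show False using mne mine by simp
    next
      case False
      then have zA: "z \<in> A" using zl by blast
      have zc: "z \<in> carrier G" using zA A_sub by blast
      show False
      proof (cases "V' = []")
        case True
        then have "b0 = z" using wV Cons zc by simp
        then show False using zA b0 AB_int by blast
      next
        case False
        have hV': "hd V' \<in> D"
        proof -
          have "hd V' \<in> (A \<union> D) - {\<one>}"
            using rV' False by (cases V') (auto simp: red_Cons)
          then show ?thesis using okz False zA by blast
        qed
        obtain y t where Qy: "normal_form G A B (word_prod G V') = m @ [y] @ mi @ t"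
          using Q[OF rV' False hV'] by blast
        have V'c: "word_prod G V' \<in> carrier G"
        proof -
          have "set V' \<subseteq> carrier G" using rV' A_sub Dc unfolding reduced_word_def by blast
          then show ?thesis using wp_carrier by blast
        qed
        have rU: "reduced_word G A B (normal_form G A B (word_prod G V'))" using nf_red[OF V'c] .
        have zl': "z \<in> (A \<union> B) - {\<one>}" using zA zl by blast
        have hU: "hd (normal_form G A B (word_prod G V')) = hd m" using Qy mne by simp
        have "normal_form G A B (z \<otimes> word_prod G (normal_form G A B (word_prod G V'))) =
              z # normal_form G A B (word_prod G V')"
          using nf_letter_mult[OF zl' rU] hU hmA zA Qy by simp
        moreover have "z \<otimes> word_prod G (normal_form G A B (word_prod G V')) = b0"
          using nf_wp[OF V'c] wV Cons by simp
        ultimately show False using nb0 Qy by simp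
      qed
    qed
  qed
qed

end


context fprod begin

lemma common_conj:
  assumes g0: "g0 \<in> carrier G" and h0: "h0 \<in> carrier G"
    and P': "fprod G (cj G g0 ` A) (cj G h0 ` B)"
  shows "\<exists>k\<in>carrier G. cj G g0 ` A = cj G k ` A \<and> cj G h0 ` B = cj G k ` B"
proof -
  define e where "e = inv g0 \<otimes> h0"
  have ec: "e \<in> carrier G" unfolding e_def using g0 h0 by simp
  obtain a \<beta> m where a: "a \<in> A" and b: "\<beta> \<in> B" and rm: "reduced_word G A B m"
    and ee: "e = a \<otimes> (word_prod G m \<otimes> \<beta>)" and hl: "m \<noteq> [] \<longrightarrow> hd m \<in> B \<and> last m \<in> A"
    using strip[OF ec] by blast
  have ac: "a \<in> carrier G" using a A_sub by blast
  have bc: "\<beta> \<in> carrier G" using b B_sub by blast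
  have mc: "word_prod G m \<in> carrier G" using wp_carrier[OF red_carrier[OF rm]] .
  have h0e: "h0 = g0 \<otimes> e" unfolding e_def using g0 h0 by simp
  define k where "k = g0 \<otimes> a"
  have kc: "k \<in> carrier G" unfolding k_def using g0 ac by simp
  have kA: "cj G k ` A = cj G g0 ` A"
  proof -
    have "cj G k ` A = cj G g0 ` (cj G a ` A)" unfolding k_def using cj_image_cj[OF g0 ac A_sub] by simp
    also have "cj G a ` A = A" using cj_image_subgroup[OF sgA a] .
    finally show ?thesis .
  qed
  show ?thesis
  proof (cases "m = []")
    case True
    then have "e = a \<otimes> \<beta>" using ee bc by simp
    then have "h0 = k \<otimes> \<beta>" using h0e g0 ac bc unfolding k_def by (simp add: m_assoc)
    then have "cj G h0 ` B = cj G k ` (cj G \<beta> ` B)" using cj_image_cj[OF kc bc B_sub] by simp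
    also have "cj G \<beta> ` B = B" using cj_image_subgroup[OF sgB b] .
    finally show ?thesis using kA kc by blast
  next
    case False
    have hm: "hd m \<in> B" and lm: "last m \<in> A" using hl False by auto
    interpret P: fprod G "cj G g0 ` A" "cj G h0 ` B" by (rule P')
    obtain b0 where b0: "b0 \<in> B" "b0 \<noteq> \<one>" using B_ne subgroup.one_closed[OF sgB] by blast
    have b0c: "b0 \<in> carrier G" using b0(1) B_sub by blast
    define x where "x = cj G k b0"
    have xc: "x \<in> carrier G" unfolding x_def using kc b0c by simp
    define W where "W = normal_form G (cj G g0 ` A) (cj G h0 ` B) x"
    have rW: "reduced_word G (cj G g0 ` A) (cj G h0 ` B) W" unfolding W_def using P.nf_red[OF xc] .
    have wW: "word_prod G W = x" unfolding W_def using P.nf_wp[OF xc] .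
    have Wc: "set W \<subseteq> carrier G" using P.red_carrier[OF rW] .
    define k1 where "k1 = inv k"
    have k1c: "k1 \<in> carrier G" unfolding k1_def using kc by simp
    have rV: "reduced_word G (cj G k1 ` (cj G g0 ` A)) (cj G k1 ` (cj G h0 ` B)) (map (cj G k1) W)"
      using red_map_cj[OF rW k1c P.A_sub P.B_sub] .
    have k1g0: "k1 \<otimes> g0 = inv a"
      unfolding k1_def k_def using g0 ac by (simp add: inv_mult_group m_assoc)
    have k1h0: "k1 \<otimes> h0 = word_prod G m \<otimes> \<beta>"
    proof -
      have "k1 \<otimes> h0 = inv a \<otimes> (inv g0 \<otimes> h0)"
        unfolding k1_def k_def using g0 ac h0 by (simp add: inv_mult_group m_assoc)
      also have "\<dots> = inv a \<otimes> (a \<otimes> (word_prod G m \<otimes> \<beta>))" using ee unfolding e_def by simp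
      also have "\<dots> = word_prod G m \<otimes> \<beta>" using ac mc bc by simp
      finally show ?thesis .
    qed
    have iaA: "inv a \<in> A" using subgroup.m_inv_closed[OF sgA a] .
    have iac: "inv a \<in> carrier G" using ac by simp
    have e1: "cj G k1 ` (cj G g0 ` A) = A"
      using cj_image_cj[OF k1c g0 A_sub] k1g0 cj_image_subgroup[OF sgA iaA] by simp
    have e2: "cj G k1 ` (cj G h0 ` B) = cj G (word_prod G m) ` B"
    proof -
      have "cj G k1 ` (cj G h0 ` B) = cj G (word_prod G m \<otimes> \<beta>) ` B"
        using cj_image_cj[OF k1c h0 B_sub] k1h0 by simp
      also have "\<dots> = cj G (word_prod G m) ` (cj G \<beta> ` B)" using cj_image_cj[OF mc bc B_sub] by simp
      also have "cj G \<beta> ` B = B" using cj_image_subgroup[OF sgB b] .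
      finally show ?thesis .
    qed
    have rV': "reduced_word G A (cj G (word_prod G m) ` B) (map (cj G k1) W)" using rV e1 e2 by simp
    have "word_prod G (map (cj G k1) W) = cj G k1 x" using wp_map_cj[OF k1c Wc] wW by simp
    also have "\<dots> = b0" unfolding k1_def x_def using kc b0c by simp
    finally have wV: "word_prod G (map (cj G k1) W) = b0" .
    show ?thesis using GEN[OF rm False hm lm rV' wV b0] by blast
  qed
qed

end


lemma omega_eq_bounded:
  assumes grp: "group G" and b: "\<forall>z\<in>carrier G. \<bar>F' z - F z\<bar> \<le> C"
  shows "omega G F = omega G F'"
proof -
  define d where "d = (\<lambda>z. F' z - F z)"
  have db: "\<forall>z\<in>carrier G. \<bar>d z\<bar> \<le> C" using b unfolding d_def by simp
  have rel: "qm_coboundary G F' x y = qm_coboundary G F x y + (d x + d y - d (x \<otimes>\<^bsub>G\<^esub> y))" for x y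
    unfolding qm_coboundary_def d_def by simp
  show ?thesis unfolding omega_def bclass_def
  proof (intro Collect_cong iffI)
    fix c' assume "\<exists>u. (\<exists>M. \<forall>x\<in>carrier G. \<bar>u x\<bar> \<le> M) \<and>
          (\<forall>x\<in>carrier G. \<forall>y\<in>carrier G. c' x y = qm_coboundary G F x y + (u x + u y - u (x \<otimes>\<^bsub>G\<^esub> y)))"
    then obtain u M where u: "\<forall>x\<in>carrier G. \<bar>u x\<bar> \<le> M"
      and c': "\<forall>x\<in>carrier G. \<forall>y\<in>carrier G. c' x y = qm_coboundary G F x y + (u x + u y - u (x \<otimes>\<^bsub>G\<^esub> y))"
      by blast
    define v where "v = (\<lambda>z. u z - d z)"
    have "\<forall>x\<in>carrier G. \<bar>v x\<bar> \<le> M + C"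
    proof
      fix x assume "x \<in> carrier G"
      then have "\<bar>u x\<bar> \<le> M" "\<bar>d x\<bar> \<le> C" using u db by auto
      then show "\<bar>v x\<bar> \<le> M + C" unfolding v_def by linarith
    qed
    moreover have "\<forall>x\<in>carrier G. \<forall>y\<in>carrier G. c' x y = qm_coboundary G F' x y + (v x + v y - v (x \<otimes>\<^bsub>G\<^esub> y))"
      using c' rel unfolding v_def by simp
    ultimately show "\<exists>u. (\<exists>M. \<forall>x\<in>carrier G. \<bar>u x\<bar> \<le> M) \<and>
          (\<forall>x\<in>carrier G. \<forall>y\<in>carrier G. c' x y = qm_coboundary G F' x y + (u x + u y - u (x \<otimes>\<^bsub>G\<^esub> y)))"
      by blast
  next
    fix c' assume "\<exists>u. (\<exists>M. \<forall>x\<in>carrier G. \<bar>u x\<bar> \<le> M) \<and>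
          (\<forall>x\<in>carrier G. \<forall>y\<in>carrier G. c' x y = qm_coboundary G F' x y + (u x + u y - u (x \<otimes>\<^bsub>G\<^esub> y)))"
    then obtain u M where u: "\<forall>x\<in>carrier G. \<bar>u x\<bar> \<le> M"
      and c': "\<forall>x\<in>carrier G. \<forall>y\<in>carrier G. c' x y = qm_coboundary G F' x y + (u x + u y - u (x \<otimes>\<^bsub>G\<^esub> y))"
      by blast
    define v where "v = (\<lambda>z. u z + d z)"
    have "\<forall>x\<in>carrier G. \<bar>v x\<bar> \<le> M + C"
    proof
      fix x assume "x \<in> carrier G"
      then have "\<bar>u x\<bar> \<le> M" "\<bar>d x\<bar> \<le> C" using u db by auto
      then show "\<bar>v x\<bar> \<le> M + C" unfolding v_def by linarith
    qed
    moreover have "\<forall>x\<in>carrier G. \<forall>y\<in>carrier G. c' x y = qm_coboundary G F x y + (v x + v y - v (x \<otimes>\<^bsub>G\<^esub> y))"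
      using c' rel unfolding v_def by simp
    ultimately show "\<exists>u. (\<exists>M. \<forall>x\<in>carrier G. \<bar>u x\<bar> \<le> M) \<and>
          (\<forall>x\<in>carrier G. \<forall>y\<in>carrier G. c' x y = qm_coboundary G F x y + (u x + u y - u (x \<otimes>\<^bsub>G\<^esub> y)))"
      by blast
  qed
qed

lemma sum_list_map_rev: "sum_list (map f (rev xs)) = sum_list (map (f::'a \<Rightarrow> real) xs)"
  by (induction xs) simp_all

context fprod begin

definition lv :: "('a \<Rightarrow> real) \<Rightarrow> ('a \<Rightarrow> real) \<Rightarrow> 'a \<Rightarrow> real" where
  "lv fA fB x = (if x \<in> A then fA x else fB x)"

lemma split_qm_lv: "split_qm G A B fA fB g = sum_list (map (lv fA fB) (normal_form G A B g))"
  unfolding split_qm_def lv_def ..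

lemma lv_bound: "\<forall>x\<in>A. \<bar>fA x\<bar> \<le> M \<Longrightarrow> \<forall>x\<in>B. \<bar>fB x\<bar> \<le> M \<Longrightarrow> x \<in> A \<union> B \<Longrightarrow> \<bar>lv fA fB x\<bar> \<le> M"
  unfolding lv_def by auto

lemma bound_letter:
  assumes MA: "\<forall>x\<in>A. \<bar>fA x\<bar> \<le> M" and MB: "\<forall>x\<in>B. \<bar>fB x\<bar> \<le> M"
    and s: "s \<in> (A \<union> B) - {\<one>}" and g: "g \<in> carrier G"
  shows "\<bar>split_qm G A B fA fB (s \<otimes> g) - split_qm G A B fA fB g\<bar> \<le> 2 * M"
proof -
  define w where "w = normal_form G A B g"
  have rw: "reduced_word G A B w" using nf_red[OF g] w_def by simp
  have gw: "g = word_prod G w" using nf_wp[OF g] w_def by simp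
  have N: "normal_form G A B (s \<otimes> g) =
    (if w = [] then [s] else if (s \<in> A \<longleftrightarrow> hd w \<in> A) then
       (if s \<otimes> hd w = \<one> then tl w else (s \<otimes> hd w) # tl w) else s # w)"
    using nf_letter_mult[OF s rw] gw by simp
  have M0: "0 \<le> M" using MA subgroup.one_closed[OF sgA] by force
  have ls: "\<bar>lv fA fB s\<bar> \<le> M" using lv_bound[OF MA MB] s by blast
  let ?S = "\<lambda>l. sum_list (map (lv fA fB) l)"
  have Fg: "split_qm G A B fA fB g = ?S w" unfolding split_qm_lv w_def ..
  have Fsg: "split_qm G A B fA fB (s \<otimes> g) = ?S (normal_form G A B (s \<otimes> g))" unfolding split_qm_lv ..
  show ?thesis
  proof (cases w)
    case Nil
    then show ?thesis using Fg Fsg N ls M0 by simp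
  next
    case (Cons y w')
    have yl: "y \<in> (A \<union> B) - {\<one>}" using rw Cons by (simp add: red_Cons)
    have ly: "\<bar>lv fA fB y\<bar> \<le> M" using lv_bound[OF MA MB] yl by blast
    have Fg': "split_qm G A B fA fB g = lv fA fB y + ?S w'" using Fg Cons by simp
    show ?thesis
    proof (cases "s \<in> A \<longleftrightarrow> y \<in> A")
      case same: True
      show ?thesis
      proof (cases "s \<otimes> y = \<one>")
        case True
        then have "split_qm G A B fA fB (s \<otimes> g) = ?S w'" using Fsg N Cons same by simp
        then show ?thesis using Fg' ly M0 by simp
      next
        case False
        have M: "s \<otimes> y \<in> (A \<union> B) - {\<one>}" using mult_same[OF s yl same False] by blast
        have lsy: "\<bar>lv fA fB (s \<otimes> y)\<bar> \<le> M" using lv_bound[OF MA MB] M by blast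
        have "split_qm G A B fA fB (s \<otimes> g) = lv fA fB (s \<otimes> y) + ?S w'" using Fsg N Cons same False by simp
        then show ?thesis using Fg' ly lsy by simp
      qed
    next
      case False
      then have "split_qm G A B fA fB (s \<otimes> g) = lv fA fB s + ?S w" using Fsg N Cons by simp
      then show ?thesis using Fg ls M0 by simp
    qed
  qed
qed

lemma bound_left_wp:
  assumes MA: "\<forall>x\<in>A. \<bar>fA x\<bar> \<le> M" and MB: "\<forall>x\<in>B. \<bar>fB x\<bar> \<le> M"
    and rw: "reduced_word G A B w" and g: "g \<in> carrier G"
  shows "\<bar>split_qm G A B fA fB (word_prod G w \<otimes> g) - split_qm G A B fA fB g\<bar> \<le> 2 * M * length w"
  using rw
proof (induction w)
  case Nil then show ?case using g by simp
next
  case (Cons s w)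
  have s: "s \<in> (A \<union> B) - {\<one>}" and rw': "reduced_word G A B w" using Cons.prems by (auto simp: red_Cons)
  have sc: "s \<in> carrier G" using letter_carrier[OF s] .
  have wc: "word_prod G w \<in> carrier G" using wp_carrier[OF red_carrier[OF rw']] .
  have wgc: "word_prod G w \<otimes> g \<in> carrier G" using wc g by simp
  have e: "word_prod G (s # w) \<otimes> g = s \<otimes> (word_prod G w \<otimes> g)" using sc wc g by (simp add: m_assoc)
  have 1: "\<bar>split_qm G A B fA fB (s \<otimes> (word_prod G w \<otimes> g)) - split_qm G A B fA fB (word_prod G w \<otimes> g)\<bar> \<le> 2 * M"
    using bound_letter[OF MA MB s wgc] .
  have 2: "\<bar>split_qm G A B fA fB (word_prod G w \<otimes> g) - split_qm G A B fA fB g\<bar> \<le> 2 * M * length w"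
    using Cons.IH[OF rw'] .
  have "2 * M * real (length (s # w)) = 2 * M + 2 * M * length w" by (simp add: algebra_simps)
  then show ?case unfolding e using 1 2 by linarith
qed

lemma bound_left:
  assumes MA: "\<forall>x\<in>A. \<bar>fA x\<bar> \<le> M" and MB: "\<forall>x\<in>B. \<bar>fB x\<bar> \<le> M"
    and k: "k \<in> carrier G" and g: "g \<in> carrier G"
  shows "\<bar>split_qm G A B fA fB (k \<otimes> g) - split_qm G A B fA fB g\<bar> \<le> 2 * M * length (normal_form G A B k)"
  using bound_left_wp[OF MA MB nf_red[OF k] g] nf_wp[OF k] by simp

lemma split_qm_inv:
  assumes aA: "\<forall>x\<in>A. fA (inv x) = - fA x" and aB: "\<forall>x\<in>B. fB (inv x) = - fB x"
    and g: "g \<in> carrier G"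
  shows "split_qm G A B fA fB (inv g) = - split_qm G A B fA fB g"
proof -
  define w where "w = normal_form G A B g"
  have rw: "reduced_word G A B w" using nf_red[OF g] w_def by simp
  have L: "lv fA fB (inv x) = - lv fA fB x" if x: "x \<in> set w" for x
  proof -
    have xl: "x \<in> (A \<union> B) - {\<one>}" using rw x unfolding reduced_word_def by blast
    have xc: "x \<in> carrier G" using letter_carrier[OF xl] .
    show ?thesis
    proof (cases "x \<in> A")
      case True then show ?thesis using aA inv_memA[OF xc] unfolding lv_def by simp
    next
      case False then have "x \<in> B" using xl by blast
      then show ?thesis using False aB inv_memA[OF xc] unfolding lv_def by simp
    qed
  qed
  have "split_qm G A B fA fB (inv g) = sum_list (map (lv fA fB) (rev (map (\<lambda>x. inv x) w)))"
    unfolding split_qm_lv using nf_inv[OF g] w_def by (simp add: inv_word_def)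
  also have "\<dots> = sum_list (map (\<lambda>x. lv fA fB (inv x)) w)" by (simp add: rev_map sum_list_map_rev o_def)
  also have "\<dots> = sum_list (map (\<lambda>x. - lv fA fB x) w)" using L by (simp cong: map_cong)
  also have "\<dots> = - sum_list (map (lv fA fB) w)" by (induction w) auto
  also have "\<dots> = - split_qm G A B fA fB g" unfolding split_qm_lv w_def ..
  finally show ?thesis .
qed

lemma bound_cj:
  assumes MA: "\<forall>x\<in>A. \<bar>fA x\<bar> \<le> M" and MB: "\<forall>x\<in>B. \<bar>fB x\<bar> \<le> M"
    and aA: "\<forall>x\<in>A. fA (inv x) = - fA x" and aB: "\<forall>x\<in>B. fB (inv x) = - fB x"
    and k: "k \<in> carrier G" and x: "x \<in> carrier G"
  shows "\<bar>split_qm G A B fA fB (cj G k x) - split_qm G A B fA fB x\<bar> \<le> 4 * M * length (normal_form G A B k)"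
proof -
  let ?F = "split_qm G A B fA fB"
  let ?L = "length (normal_form G A B k)"
  have kx: "k \<otimes> x \<in> carrier G" using k x by simp
  have ik: "inv k \<in> carrier G" using k by simp
  have 1: "\<bar>?F (k \<otimes> x) - ?F x\<bar> \<le> 2 * M * ?L" using bound_left[OF MA MB k x] .
  have "\<bar>?F (k \<otimes> inv (k \<otimes> x)) - ?F (inv (k \<otimes> x))\<bar> \<le> 2 * M * ?L"
    using bound_left[OF MA MB k inv_closed[OF kx]] .
  moreover have "k \<otimes> inv (k \<otimes> x) = inv (cj G k x)"
    unfolding cj_def using k x by (simp add: inv_mult_group m_assoc)
  ultimately have "\<bar>?F (inv (cj G k x)) - ?F (inv (k \<otimes> x))\<bar> \<le> 2 * M * ?L" by simp
  moreover have "?F (inv (cj G k x)) = - ?F (cj G k x)" using split_qm_inv[OF aA aB] k x by simp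
  moreover have "?F (inv (k \<otimes> x)) = - ?F (k \<otimes> x)" using split_qm_inv[OF aA aB kx] .
  ultimately have 2: "\<bar>?F (cj G k x) - ?F (k \<otimes> x)\<bar> \<le> 2 * M * ?L" by linarith
  have "4 * M * ?L = 2 * M * ?L + 2 * M * ?L" by simp
  then show ?thesis using 1 2 by linarith
qed

end

context group begin
lemma cj_inv_image: "k \<in> carrier G \<Longrightarrow> X \<subseteq> carrier G \<Longrightarrow> cj G (inv k) ` (cj G k ` X) = X"
proof -
  assume k: "k \<in> carrier G" and X: "X \<subseteq> carrier G"
  have "cj G (inv k) ` (cj G k ` X) = (cj G (inv k) \<circ> cj G k) ` X" by (simp add: image_comp)
  also have "\<dots> = (\<lambda>x. x) ` X" using k X by (intro image_cong) (auto simp: subset_iff)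
  finally show ?thesis by simp
qed
end

context fprod begin

lemma classes_conj_sub:
  assumes k: "k \<in> carrier G" and P': "fprod G (cj G k ` A) (cj G k ` B)"
  shows "split_classes G A B \<subseteq> split_classes G (cj G k ` A) (cj G k ` B)"
proof
  fix cl assume "cl \<in> split_classes G A B"
  then obtain fA fB where cl: "cl = omega G (split_qm G A B fA fB)"
    and bA: "bounded_alternating G A fA" and bB: "bounded_alternating G B fB"
    unfolding split_classes_def by blast
  obtain MA where MA: "\<forall>x\<in>A. \<bar>fA x\<bar> \<le> MA" and aA: "\<forall>x\<in>A. fA (inv x) = - fA x"
    using bA unfolding bounded_alternating_def by blast
  obtain MB where MB: "\<forall>x\<in>B. \<bar>fB x\<bar> \<le> MB" and aB: "\<forall>x\<in>B. fB (inv x) = - fB x"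
    using bB unfolding bounded_alternating_def by blast
  define M where "M = max MA MB"
  have MA': "\<forall>x\<in>A. \<bar>fA x\<bar> \<le> M" using MA unfolding M_def by force
  have MB': "\<forall>x\<in>B. \<bar>fB x\<bar> \<le> M" using MB unfolding M_def by force
  define A' where "A' = cj G k ` A"
  define B' where "B' = cj G k ` B"
  define fA' where "fA' = (\<lambda>y. fA (cj G (inv k) y))"
  define fB' where "fB' = (\<lambda>y. fB (cj G (inv k) y))"
  interpret P: fprod G A' B' using P' unfolding A'_def B'_def .
  have ik: "inv k \<in> carrier G" using k by simp
  have bal: "bounded_alternating G (cj G k ` X) (\<lambda>y. f (cj G (inv k) y))"
    if Xs: "subgroup X G" and Mf: "\<forall>x\<in>X. \<bar>f x\<bar> \<le> M" and af: "\<forall>x\<in>X. f (inv x) = - f x" for X f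
  proof -
    have Xc: "X \<subseteq> carrier G" using Xs subgroup.subset by blast
    have "\<forall>y\<in>cj G k ` X. \<bar>f (cj G (inv k) y)\<bar> \<le> M"
    proof
      fix y assume "y \<in> cj G k ` X"
      then obtain x where x: "x \<in> X" "y = cj G k x" by blast
      have "cj G (inv k) y = x" using x Xc k by auto
      then show "\<bar>f (cj G (inv k) y)\<bar> \<le> M" using Mf x(1) by simp
    qed
    moreover have "\<forall>y\<in>cj G k ` X. f (cj G (inv k) (inv y)) = - f (cj G (inv k) y)"
    proof
      fix y assume "y \<in> cj G k ` X"
      then obtain x where x: "x \<in> X" "y = cj G k x" by blast
      have xc: "x \<in> carrier G" using x(1) Xc by blast
      have "cj G (inv k) y = x" using x Xc k by auto
      moreover have "inv y = cj G k (inv x)" using cj_inv[OF k xc] x(2) by simp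
      then have "cj G (inv k) (inv y) = inv x" using k xc by simp
      ultimately show "f (cj G (inv k) (inv y)) = - f (cj G (inv k) y)"
        using af x(1) by simp
    qed
    ultimately show ?thesis unfolding bounded_alternating_def by blast
  qed
  have bA': "bounded_alternating G A' fA'" unfolding A'_def fA'_def using bal[OF sgA MA' aA] .
  have bB': "bounded_alternating G B' fB'" unfolding B'_def fB'_def using bal[OF sgB MB' aB] .
  have key: "split_qm G A' B' fA' fB' z = split_qm G A B fA fB (cj G (inv k) z)" if z: "z \<in> carrier G" for z
  proof -
    define x where "x = cj G (inv k) z"
    have xc: "x \<in> carrier G" unfolding x_def using z ik by simp
    have zx: "z = cj G k x" unfolding x_def using z k by simp
    define w where "w = normal_form G A B x"
    have rw: "reduced_word G A B w" unfolding w_def using nf_red[OF xc] .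
    have wc: "set w \<subseteq> carrier G" using red_carrier[OF rw] .
    have "reduced_word G A' B' (map (cj G k) w)" unfolding A'_def B'_def
      using red_map_cj[OF rw k A_sub B_sub] .
    moreover have "word_prod G (map (cj G k) w) = z"
      using wp_map_cj[OF k wc] nf_wp[OF xc] zx unfolding w_def by simp
    ultimately have nz: "normal_form G A' B' z = map (cj G k) w" using P.nf_eq by blast
    have L: "(if cj G k y \<in> A' then fA' (cj G k y) else fB' (cj G k y)) = (if y \<in> A then fA y else fB y)"
      if y: "y \<in> set w" for y
    proof -
      have yc: "y \<in> carrier G" using y wc by blast
      have "cj G k y \<in> A' \<longleftrightarrow> y \<in> A" unfolding A'_def using cj_mem_iff[OF k A_sub yc] .
      moreover have "fA' (cj G k y) = fA y" "fB' (cj G k y) = fB y"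
        unfolding fA'_def fB'_def using k yc by simp_all
      ultimately show ?thesis by simp
    qed
    have "split_qm G A' B' fA' fB' z =
        sum_list (map (\<lambda>y. if y \<in> A' then fA' y else fB' y) (map (cj G k) w))"
      unfolding split_qm_def nz ..
    also have "\<dots> = sum_list (map (\<lambda>y. if cj G k y \<in> A' then fA' (cj G k y) else fB' (cj G k y)) w)"
      by (simp add: o_def)
    also have "\<dots> = sum_list (map (\<lambda>y. if y \<in> A then fA y else fB y) w)"
      using L by (simp cong: map_cong)
    also have "\<dots> = split_qm G A B fA fB x" unfolding split_qm_def w_def ..
    finally show ?thesis unfolding x_def .
  qed
  have "\<forall>z\<in>carrier G. \<bar>split_qm G A' B' fA' fB' z - split_qm G A B fA fB z\<bar>
          \<le> 4 * M * length (normal_form G A B (inv k))"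
    using key bound_cj[OF MA' MB' aA aB ik] by simp
  then have "omega G (split_qm G A B fA fB) = omega G (split_qm G A' B' fA' fB')"
    using omega_eq_bounded[OF is_group] by blast
  then show "cl \<in> split_classes G (cj G k ` A) (cj G k ` B)"
    unfolding split_classes_def A'_def[symmetric] B'_def[symmetric] using cl bA' bB' by blast
qed

lemma classes_conj_eq:
  assumes k: "k \<in> carrier G" and P': "fprod G (cj G k ` A) (cj G k ` B)"
  shows "split_classes G A B = split_classes G (cj G k ` A) (cj G k ` B)"
proof
  show "split_classes G A B \<subseteq> split_classes G (cj G k ` A) (cj G k ` B)" using classes_conj_sub[OF k P'] .
  interpret P: fprod G "cj G k ` A" "cj G k ` B" by (rule P')
  have ik: "inv k \<in> carrier G" using k by simp
  have eA: "cj G (inv k) ` (cj G k ` A) = A" using cj_inv_image[OF k A_sub] .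
  have eB: "cj G (inv k) ` (cj G k ` B) = B" using cj_inv_image[OF k B_sub] .
  have "fprod G (cj G (inv k) ` (cj G k ` A)) (cj G (inv k) ` (cj G k ` B))"
    unfolding eA eB by (rule fprod_axioms)
  then show "split_classes G (cj G k ` A) (cj G k ` B) \<subseteq> split_classes G A B"
    using P.classes_conj_sub[OF ik] unfolding eA eB by blast
qed

lemma qm_swap: "g \<in> carrier G \<Longrightarrow> split_qm G A B fA fB g = split_qm G B A fB fA g"
proof -
  assume g: "g \<in> carrier G"
  have r: "reduced_word G A B (normal_form G A B g)" using nf_red[OF g] .
  have L: "(if x \<in> A then fA x else fB x) = (if x \<in> B then fB x else fA x)"
    if x: "x \<in> set (normal_form G A B g)" for x
  proof -
    have "x \<in> (A \<union> B) - {\<one>}" using r x unfolding reduced_word_def by blast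
    then have "x \<in> A \<longleftrightarrow> x \<notin> B" by (rule letter_iff)
    then show ?thesis by auto
  qed
  show ?thesis unfolding split_qm_def nf_swap[of G A B, symmetric] using L by (simp cong: map_cong)
qed

lemma classes_swap: "split_classes G A B = split_classes G B A"
proof -
  have e: "omega G (split_qm G A B fA fB) = omega G (split_qm G B A fB fA)" for fA fB
    using omega_eq_bounded[OF is_group, of "split_qm G A B fA fB" "split_qm G B A fB fA" 0] qm_swap by simp
  show ?thesis unfolding split_classes_def
  proof (intro Set.equalityI subsetI)
    fix cl assume "cl \<in> {omega G (split_qm G A B fA fB) |fA fB. bounded_alternating G A fA \<and> bounded_alternating G B fB}"
    then obtain fA fB where "cl = omega G (split_qm G A B fA fB)" "bounded_alternating G A fA" "bounded_alternating G B fB" by blast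
    then show "cl \<in> {omega G (split_qm G B A fA fB) |fA fB. bounded_alternating G B fA \<and> bounded_alternating G A fB}"
      using e by blast
  next
    fix cl assume "cl \<in> {omega G (split_qm G B A fA fB) |fA fB. bounded_alternating G B fA \<and> bounded_alternating G A fB}"
    then obtain fA fB where "cl = omega G (split_qm G B A fA fB)" "bounded_alternating G B fA" "bounded_alternating G A fB" by blast
    then show "cl \<in> {omega G (split_qm G A B fA fB) |fA fB. bounded_alternating G A fA \<and> bounded_alternating G B fB}"
      using e[of fB fA] by blast
  qed
qed

end

theorem proposition3p16:
  fixes G :: "('a, 'b) monoid_scheme" and A B A' B' :: "'a set"
  assumes "group G"
    and "is_splitting G A B" and "finite A" and "finite B"
    and "is_splitting G A' B'"
  shows "split_classes G A B = split_classes G A' B'"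
proof -
  have P: "fprod G A B" using assms by (simp add: fprod_def fprod_axioms_def)
  have P': "fprod G A' B'" using assms by (simp add: fprod_def fprod_axioms_def)
  interpret P: fprod G A B by (rule P)
  interpret P': fprod G A' B' by (rule P')
  obtain g h where g: "g \<in> carrier G" and h: "h \<in> carrier G"
    and c: "(A = cj G g ` A' \<and> B = cj G h ` B') \<or> (A = cj G g ` B' \<and> B = cj G h ` A')"
    using struct_thm[OF P assms(3,4) P'] by blast
  have ig: "inv\<^bsub>G\<^esub> g \<in> carrier G" and ih: "inv\<^bsub>G\<^esub> h \<in> carrier G" using g h by simp_all
  from c show ?thesis
  proof
    assume c1: "A = cj G g ` A' \<and> B = cj G h ` B'"
    have eA: "A' = cj G (inv\<^bsub>G\<^esub> g) ` A" using c1 P.cj_inv_image[OF g P'.A_sub] by simp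
    have eB: "B' = cj G (inv\<^bsub>G\<^esub> h) ` B" using c1 P.cj_inv_image[OF h P'.B_sub] by simp
    have "fprod G (cj G (inv\<^bsub>G\<^esub> g) ` A) (cj G (inv\<^bsub>G\<^esub> h) ` B)" using P' eA eB by simp
    then obtain k where k: "k \<in> carrier G" "cj G (inv\<^bsub>G\<^esub> g) ` A = cj G k ` A" "cj G (inv\<^bsub>G\<^esub> h) ` B = cj G k ` B"
      using P.common_conj[OF ig ih] by blast
    have "fprod G (cj G k ` A) (cj G k ` B)" using P' eA eB k by simp
    then have "split_classes G A B = split_classes G (cj G k ` A) (cj G k ` B)"
      using P.classes_conj_eq[OF k(1)] by blast
    then show ?thesis using eA eB k by simp
  next
    assume c2: "A = cj G g ` B' \<and> B = cj G h ` A'"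
    have eB: "B' = cj G (inv\<^bsub>G\<^esub> g) ` A" using c2 P.cj_inv_image[OF g P'.B_sub] by simp
    have eA: "A' = cj G (inv\<^bsub>G\<^esub> h) ` B" using c2 P.cj_inv_image[OF h P'.A_sub] by simp
    have "fprod G (cj G (inv\<^bsub>G\<^esub> g) ` A) (cj G (inv\<^bsub>G\<^esub> h) ` B)" using P'.swap eA eB by simp
    then obtain k where k: "k \<in> carrier G" "cj G (inv\<^bsub>G\<^esub> g) ` A = cj G k ` A" "cj G (inv\<^bsub>G\<^esub> h) ` B = cj G k ` B"
      using P.common_conj[OF ig ih] by blast
    have "fprod G (cj G k ` A) (cj G k ` B)" using P'.swap eA eB k by simp
    then have "split_classes G A B = split_classes G (cj G k ` A) (cj G k ` B)"
      using P.classes_conj_eq[OF k(1)] by blast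
    also have "\<dots> = split_classes G B' A'" using eA eB k by simp
    also have "\<dots> = split_classes G A' B'" using P'.classes_swap by simp
    finally show ?thesis .
  qed
qed


end
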